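(* Let $R$ be a local ring with Jacobson radical $J(R)$, set $\overline{R}=R/J(R)$, and let $C_n$ be a cyclic group of order $n$ (a positive integer). If the characteristic of $\overline{R}$ is not $2$, then the group ring $RC_n$ is 2-good.
   Context: A ring $S$ (associative with identity) is called $n$-good if every element of $S$ is a sum of $n$ units of $S$. A local ring is a ring $R$ in which $R/J(R)$ is a division ring. *)

theory Defs
  imports Main
begin

definition left_ideal :: "'a::ring_1 set \<Rightarrow> bool" where
  "left_ideal I \<longleftrightarrow> 0 \<in> I \<and> (\<forall>x\<in>I. \<forall>y\<in>I. x + y \<in> I) \<and> (\<forall>x\<in>I. - x \<in> I)
     \<and> (\<forall>r. \<forall>x\<in>I. r * x \<in> I)"

definition maximal_left_ideal :: "'a::ring_1 set \<Rightarrow> bool" where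
  "maximal_left_ideal I \<longleftrightarrow> left_ideal I \<and> I \<noteq> UNIV \<and>
     (\<forall>K. left_ideal K \<and> I \<subseteq> K \<longrightarrow> K = I \<or> K = UNIV)"

definition jacobson :: "'a::ring_1 set" where
  "jacobson = \<Inter>{I. maximal_left_ideal I}"

(* R/J(R) is a division ring, written out on representatives:
   the quotient is nontrivial (1 \<notin> J) and every class x + J with x \<notin> J
   has a two-sided inverse class y + J. *)
definition local_ring :: "'a::ring_1 itself \<Rightarrow> bool" where
  "local_ring _ \<longleftrightarrow> (1::'a) \<notin> jacobson \<and>
     (\<forall>x::'a. x \<notin> jacobson \<longrightarrow> (\<exists>y. x * y - 1 \<in> jacobson \<and> y * x - 1 \<in> jacobson))"

definition char_rad_quot :: "'a::ring_1 itself \<Rightarrow> nat" where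
  "char_rad_quot _ = (if \<exists>m>0. (of_nat m :: 'a) \<in> jacobson
      then (LEAST m. m > 0 \<and> (of_nat m :: 'a) \<in> jacobson) else 0)"

(* Group ring R C_n, C_n = Z/nZ = {0,...,n-1} with addition mod n.
   Elements: functions nat => R vanishing outside {0..<n}. *)
definition gr_carrier :: "nat \<Rightarrow> (nat \<Rightarrow> 'a::ring_1) set" where
  "gr_carrier n = {f. \<forall>k\<ge>n. f k = 0}"

definition gr_one :: "nat \<Rightarrow> nat \<Rightarrow> 'a::ring_1" where
  "gr_one n = (\<lambda>k. if k = 0 then 1 else 0)"

definition gr_mult :: "nat \<Rightarrow> (nat \<Rightarrow> 'a::ring_1) \<Rightarrow> (nat \<Rightarrow> 'a) \<Rightarrow> nat \<Rightarrow> 'a" where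
  "gr_mult n f g = (\<lambda>k. if k < n then (\<Sum>i<n. \<Sum>j<n. if (i + j) mod n = k then f i * g j else 0)
                        else 0)"

definition gr_unit :: "nat \<Rightarrow> (nat \<Rightarrow> 'a::ring_1) \<Rightarrow> bool" where
  "gr_unit n u \<longleftrightarrow> u \<in> gr_carrier n \<and>
     (\<exists>v\<in>gr_carrier n. gr_mult n u v = gr_one n \<and> gr_mult n v u = gr_one n)"

definition gr_good :: "nat \<Rightarrow> 'a::ring_1 itself \<Rightarrow> nat \<Rightarrow> bool" where
  "gr_good n _ m \<longleftrightarrow> (\<forall>x \<in> (gr_carrier n :: (nat \<Rightarrow> 'a) set).
      \<exists>u. (\<forall>i<m. gr_unit n (u i)) \<and> x = (\<lambda>k. \<Sum>i<m. u i k))"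

end

theory Submission
  imports Defs "HOL-Algebra.QuotRing"
begin
abbreviation JJ :: "'a::ring_1 set" where "JJ \<equiv> jacobson"

lemma J_zero: "0 \<in> (jacobson :: 'a::ring_1 set)"
  by (auto simp: jacobson_def maximal_left_ideal_def left_ideal_def)

lemma J_add: "x \<in> (jacobson :: 'a::ring_1 set) \<Longrightarrow> y \<in> jacobson \<Longrightarrow> x + y \<in> jacobson"
  by (auto simp: jacobson_def maximal_left_ideal_def left_ideal_def)

lemma J_neg: "x \<in> (jacobson :: 'a::ring_1 set) \<Longrightarrow> - x \<in> jacobson"
  by (auto simp: jacobson_def maximal_left_ideal_def left_ideal_def)

lemma J_lmult: "x \<in> (jacobson :: 'a::ring_1 set) \<Longrightarrow> r * x \<in> jacobson"
  by (auto simp: jacobson_def maximal_left_ideal_def left_ideal_def)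

lemma J_diff: "x \<in> (jacobson :: 'a::ring_1 set) \<Longrightarrow> y \<in> jacobson \<Longrightarrow> x - y \<in> jacobson"
  using J_add[OF _ J_neg] by (metis diff_conv_add_uminus)

lemma J_sum: "(\<And>i. i \<in> A \<Longrightarrow> f i \<in> (jacobson :: 'a::ring_1 set)) \<Longrightarrow> sum f A \<in> jacobson"
  by (induction A rule: infinite_finite_induct) (auto intro: J_zero J_add)

lemma J_left_inv:
  fixes j :: "'a::ring_1"
  assumes j: "j \<in> jacobson"
  shows "\<exists>b. b * (1 - j) = 1"
proof (rule ccontr)
  assume nb: "\<not> (\<exists>b. b * (1 - j) = 1)"
  define L where "L = {r * (1 - j) | r. True}"
  have L_li: "left_ideal L"
    unfolding left_ideal_def L_def
  proof (intro conjI ballI allI)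
    show "0 \<in> {r * (1 - j) |r. True}" by (rule CollectI, rule exI[of _ 0]) simp
    fix x y assume "x \<in> {r * (1 - j) |r. True}" "y \<in> {r * (1 - j) |r. True}"
    then obtain r s where "x = r * (1 - j)" "y = s * (1 - j)" by auto
    then show "x + y \<in> {r * (1 - j) |r. True}" by (auto intro!: exI[of _ "r + s"] simp: distrib_right)
  next
    fix x assume "x \<in> {r * (1 - j) |r. True}"
    then obtain r where "x = r * (1 - j)" by auto
    then show "- x \<in> {r * (1 - j) |r. True}" by (auto intro!: exI[of _ "- r"])
  next
    fix t x assume "x \<in> {r * (1 - j) |r. True}"
    then obtain r where "x = r * (1 - j)" by auto
    then show "t * x \<in> {r * (1 - j) |r. True}" by (auto intro!: exI[of _ "t * r"] simp: mult.assoc)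
  qed
  have oneL: "1 \<notin> L" using nb L_def by auto
  define A where "A = {K. left_ideal K \<and> L \<subseteq> K \<and> (1::'a) \<notin> K}"
  have "\<forall>C\<in>chains A. \<exists>U\<in>A. \<forall>X\<in>C. X \<subseteq> U"
  proof
    fix C assume C: "C \<in> chains A"
    show "\<exists>U\<in>A. \<forall>X\<in>C. X \<subseteq> U"
    proof (cases "C = {}")
      case True
      then show ?thesis using L_li oneL unfolding A_def by auto
    next
      case False
      have CA: "\<And>X. X \<in> C \<Longrightarrow> left_ideal X \<and> L \<subseteq> X \<and> (1::'a) \<notin> X"
        using C unfolding chains_def A_def by auto
      have ch: "\<And>X Y. X \<in> C \<Longrightarrow> Y\<in>C \<Longrightarrow> X \<subseteq> Y \<or> Y \<subseteq> X"
        using C unfolding chains_def chain_subset_def by auto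
      obtain X0 where X0: "X0 \<in> C" using False by auto
      have "left_ideal (\<Union>C)"
        unfolding left_ideal_def
      proof (intro conjI ballI allI)
        have "0 \<in> X0" using CA[OF X0] unfolding left_ideal_def by auto
        then show "0 \<in> \<Union>C" using X0 by auto
      next
        fix x y assume "x \<in> \<Union>C" "y \<in> \<Union>C"
        then obtain X Y where XY: "X \<in> C" "Y \<in> C" "x \<in> X" "y \<in> Y" by auto
        show "x + y \<in> \<Union>C"
        proof (cases "X \<subseteq> Y")
          case True
          then have "x + y \<in> Y" using CA[OF XY(2)] XY unfolding left_ideal_def by auto
          then show ?thesis using XY by auto
        next
          case False
          then have "Y \<subseteq> X" using ch XY by auto
          then have "x + y \<in> X" using CA[OF XY(1)] XY unfolding left_ideal_def by auto
          then show ?thesis using XY by auto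
        qed
      next
        fix x assume "x \<in> \<Union>C"
        then obtain X where X: "X \<in> C" "x \<in> X" by auto
        then have "- x \<in> X" using CA[OF X(1)] unfolding left_ideal_def by auto
        then show "- x \<in> \<Union>C" using X by auto
      next
        fix r x assume "x \<in> \<Union>C"
        then obtain X where X: "X \<in> C" "x \<in> X" by auto
        then have "r * x \<in> X" using CA[OF X(1)] unfolding left_ideal_def by auto
        then show "r * x \<in> \<Union>C" using X by auto
      qed
      moreover have "L \<subseteq> \<Union>C" using CA[OF X0] X0 by auto
      moreover have "1 \<notin> \<Union>C" using CA by auto
      ultimately show ?thesis unfolding A_def by auto
    qed
  qed
  from Zorn_Lemma2[OF this] obtain M where M: "M \<in> A" "\<forall>X\<in>A. M \<subseteq> X \<longrightarrow> X = M" by blast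
  have MA: "left_ideal M" "L \<subseteq> M" "1 \<notin> M" using M(1) unfolding A_def by auto
  have "maximal_left_ideal M"
    unfolding maximal_left_ideal_def
  proof (intro conjI allI impI)
    show "left_ideal M" by (rule MA)
    show "M \<noteq> UNIV" using MA by auto
    fix K assume K: "left_ideal K \<and> M \<subseteq> K"
    show "K = M \<or> K = UNIV"
    proof (cases "1 \<in> K")
      case True
      then have "\<forall>r. r * 1 \<in> K" using K unfolding left_ideal_def by blast
      then show ?thesis by auto
    next
      case False
      then have "K \<in> A" using K MA unfolding A_def by auto
      then show ?thesis using M K by auto
    qed
  qed
  then have "j \<in> M" using j unfolding jacobson_def by blast
  moreover have "1 * (1 - j) \<in> L" unfolding L_def by blast
  then have "1 - j \<in> M" using MA by auto
  ultimately have "(1 - j) + j \<in> M" using MA unfolding left_ideal_def by blast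
  then show False using MA by auto
qed

lemma one_notin_J: "local_ring TYPE('a::ring_1) \<Longrightarrow> (1::'a) \<notin> jacobson"
  by (simp add: local_ring_def)

lemma J_unit: "(j::'a::ring_1) \<in> jacobson \<Longrightarrow> \<exists>u. u * (1 - j) = 1 \<and> (1 - j) * u = 1"
proof -
  assume j: "j \<in> (jacobson::'a set)"
  obtain a where a: "a * (1 - j) = 1" using J_left_inv[OF j] by blast
  have "a = 1 - (- (a * j))" using a by (simp add: algebra_simps)
  moreover have "- (a * j) \<in> (jacobson::'a set)" using j J_lmult J_neg by blast
  ultimately obtain b where b: "b * a = 1" using J_left_inv by metis
  have "b = b * (a * (1 - j))" using a by simp
  also have "\<dots> = 1 - j" using b by (simp add: mult.assoc[symmetric])
  finally have "(1 - j) * a = 1" using b by simp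
  then show ?thesis using a by blast
qed

lemma nonJ_unit: "local_ring TYPE('a::ring_1) \<Longrightarrow> (x::'a) \<notin> jacobson \<Longrightarrow> \<exists>y. x * y = 1 \<and> y * x = 1"
proof -
  assume loc: "local_ring TYPE('a::ring_1)" and x: "(x::'a) \<notin> jacobson"
  then obtain y where y: "x * y - 1 \<in> jacobson" "y * x - 1 \<in> jacobson" using loc local_ring_def by blast
  have "- (x * y - 1) \<in> jacobson" "- (y * x - 1) \<in> jacobson" using y J_neg by blast+
  then obtain u v where u: "u * (1 - - (x * y - 1)) = 1" "(1 - - (x * y - 1)) * u = 1"
    and v: "v * (1 - - (y * x - 1)) = 1" "(1 - - (y * x - 1)) * v = 1"
    using J_unit by metis
  have r: "x * (y * u) = 1" using u by (simp add: mult.assoc)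
  have l: "(v * y) * x = 1" using v by (simp add: mult.assoc)
  have "v * y = v * y * (x * (y * u))" using r by simp
  also have "\<dots> = y * u" using l by (simp add: mult.assoc[symmetric])
  finally show ?thesis using r l by metis
qed

lemma J_no_linv: "local_ring TYPE('a::ring_1) \<Longrightarrow> (j::'a) \<in> jacobson \<Longrightarrow> b * j \<noteq> 1"
  using J_lmult one_notin_J by metis

lemma J_rmult: "local_ring TYPE('a::ring_1) \<Longrightarrow> (j::'a) \<in> jacobson \<Longrightarrow> j * r \<in> jacobson"
proof (rule ccontr)
  assume loc: "local_ring TYPE('a)" and j: "j \<in> jacobson" and n: "j * r \<notin> jacobson"
  obtain u where u: "j * r * u = 1" using nonJ_unit[OF loc n] by blast
  define a where "a = r * u"
  have ja: "j * a = 1" using u a_def by (simp add: mult.assoc)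
  have aj: "a * j \<in> jacobson" using j J_lmult by blast
  obtain b where b: "b * (1 - a * j) = 1" using J_unit[OF aj] by blast
  have "(a * j) * (a * j) = a * j" by (metis mult.assoc ja mult_1)
  then have "(1 - a * j) * (a * j) = 0" by (simp add: left_diff_distrib)
  then have "a * j = 0" using b by (metis mult.assoc mult_1 mult_zero_right)
  then have "j = 0" using ja by (metis mult.assoc mult_1 mult_zero_right)
  then show False using ja by simp
qed

lemma two_notin_J:
  assumes loc: "local_ring TYPE('a::ring_1)" and "char_rad_quot TYPE('a) \<noteq> 2"
  shows "(2::'a) \<notin> jacobson"
proof
  assume t: "(2::'a) \<in> jacobson"
  have ex: "\<exists>m>0. (of_nat m :: 'a) \<in> jacobson" using t by (intro exI[of _ "2::nat"]) simp
  have "(LEAST m::nat. m > 0 \<and> (of_nat m :: 'a) \<in> jacobson) = 2"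
  proof (rule Least_equality)
    show "(2::nat) > 0 \<and> (of_nat 2 :: 'a) \<in> jacobson" using t by simp
    fix m assume m: "m > 0 \<and> (of_nat m :: 'a) \<in> jacobson"
    show "2 \<le> m"
    proof (rule ccontr)
      assume "\<not> 2 \<le> m"
      then have "m = 1" using m by auto
      then show False using m one_notin_J[OF loc] by simp
    qed
  qed
  then have "char_rad_quot TYPE('a) = 2" using ex by (simp add: char_rad_quot_def)
  then show False using assms by simp
qed

lemma gm_lt: "k < n \<Longrightarrow> gr_mult n f g k = (\<Sum>i<n. \<Sum>j<n. if (i + j) mod n = k then f i * g j else 0)"
  by (simp add: gr_mult_def)

lemma gm_ge: "\<not> k < n \<Longrightarrow> gr_mult n f g k = 0"
  by (simp add: gr_mult_def)

lemma gm_carrier: "gr_mult n f g \<in> gr_carrier n"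
  by (simp add: gr_mult_def gr_carrier_def)

lemma collapse: "(n::nat) > 0 \<Longrightarrow> (\<Sum>i<n. if c mod n = i then F i else 0) = F (c mod n)"
  by (simp add: sum.delta)

lemma swap4: "(\<Sum>i\<in>A. \<Sum>j\<in>B. \<Sum>a\<in>C. \<Sum>b\<in>D. F i j a b) = (\<Sum>j\<in>B. \<Sum>a\<in>C. \<Sum>b\<in>D. \<Sum>i\<in>A. F i j a b)"
proof -
  have "(\<Sum>i\<in>A. \<Sum>j\<in>B. \<Sum>a\<in>C. \<Sum>b\<in>D. F i j a b) = (\<Sum>j\<in>B. \<Sum>i\<in>A. \<Sum>a\<in>C. \<Sum>b\<in>D. F i j a b)"
    by (rule sum.swap)
  also have "\<dots> = (\<Sum>j\<in>B. \<Sum>a\<in>C. \<Sum>i\<in>A. \<Sum>b\<in>D. F i j a b)"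
    by (rule sum.cong, rule refl, rule sum.swap)
  also have "\<dots> = (\<Sum>j\<in>B. \<Sum>a\<in>C. \<Sum>b\<in>D. \<Sum>i\<in>A. F i j a b)"
    by (rule sum.cong, rule refl, rule sum.cong, rule refl, rule sum.swap)
  finally show ?thesis .
qed

lemma swap3: "(\<Sum>i\<in>A. \<Sum>j\<in>B. \<Sum>a\<in>C. F i j a) = (\<Sum>j\<in>B. \<Sum>a\<in>C. \<Sum>i\<in>A. F i j a)"
proof -
  have "(\<Sum>i\<in>A. \<Sum>j\<in>B. \<Sum>a\<in>C. F i j a) = (\<Sum>j\<in>B. \<Sum>i\<in>A. \<Sum>a\<in>C. F i j a)"
    by (rule sum.swap)
  also have "\<dots> = (\<Sum>j\<in>B. \<Sum>a\<in>C. \<Sum>i\<in>A. F i j a)"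
    by (rule sum.cong, rule refl, rule sum.swap)
  finally show ?thesis .
qed

lemma assoc_left:
  assumes n: "n > 0" and k: "k < n"
  shows "gr_mult n (gr_mult n f g) h k =
    (\<Sum>a<n. \<Sum>b<n. \<Sum>j<n. if (a + b + j) mod n = k then f a * g b * h j else 0)"
proof -
  have "gr_mult n (gr_mult n f g) h k =
     (\<Sum>i<n. \<Sum>j<n. if (i + j) mod n = k then (\<Sum>a<n. \<Sum>b<n. if (a + b) mod n = i then f a * g b else 0) * h j else 0)"
    unfolding gm_lt[OF k] by (intro sum.cong refl) (simp add: gm_lt)
  also have "\<dots> = (\<Sum>i<n. \<Sum>j<n. \<Sum>a<n. \<Sum>b<n. if (a + b) mod n = i then (if (i + j) mod n = k then f a * g b * h j else 0) else 0)"
    by (intro sum.cong refl) (auto simp: sum_distrib_right intro!: sum.cong sum.neutral)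
  also have "\<dots> = (\<Sum>j<n. \<Sum>a<n. \<Sum>b<n. \<Sum>i<n. if (a + b) mod n = i then (if (i + j) mod n = k then f a * g b * h j else 0) else 0)"
    by (rule swap4)
  also have "\<dots> = (\<Sum>j<n. \<Sum>a<n. \<Sum>b<n. if ((a + b) mod n + j) mod n = k then f a * g b * h j else 0)"
    using n by (simp add: collapse)
  also have "\<dots> = (\<Sum>a<n. \<Sum>b<n. \<Sum>j<n. if (a + b + j) mod n = k then f a * g b * h j else 0)"
    by (subst swap3) (simp add: mod_add_left_eq)
  finally show ?thesis .
qed

lemma assoc_right:
  assumes n: "n > 0" and k: "k < n"
  shows "gr_mult n f (gr_mult n g h) k =
    (\<Sum>a<n. \<Sum>b<n. \<Sum>j<n. if (a + b + j) mod n = k then f a * g b * h j else 0)"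
proof -
  have "gr_mult n f (gr_mult n g h) k =
     (\<Sum>a<n. \<Sum>i<n. if (a + i) mod n = k then f a * (\<Sum>b<n. \<Sum>j<n. if (b + j) mod n = i then g b * h j else 0) else 0)"
    unfolding gm_lt[OF k] by (intro sum.cong refl) (simp add: gm_lt)
  also have "\<dots> = (\<Sum>a<n. \<Sum>i<n. \<Sum>b<n. \<Sum>j<n. if (b + j) mod n = i then (if (a + i) mod n = k then f a * g b * h j else 0) else 0)"
    by (intro sum.cong refl) (auto simp: sum_distrib_left mult.assoc intro!: sum.cong sum.neutral)
  also have "\<dots> = (\<Sum>a<n. \<Sum>b<n. \<Sum>j<n. \<Sum>i<n. if (b + j) mod n = i then (if (a + i) mod n = k then f a * g b * h j else 0) else 0)"
    by (rule sum.cong, rule refl, rule swap3)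
  also have "\<dots> = (\<Sum>a<n. \<Sum>b<n. \<Sum>j<n. if (a + (b + j) mod n) mod n = k then f a * g b * h j else 0)"
    using n by (simp add: collapse)
  also have "\<dots> = (\<Sum>a<n. \<Sum>b<n. \<Sum>j<n. if (a + b + j) mod n = k then f a * g b * h j else 0)"
    by (simp add: mod_add_right_eq add.assoc)
  finally show ?thesis .
qed

lemma gm_assoc: "n > 0 \<Longrightarrow> gr_mult n (gr_mult n f g) h = gr_mult n f (gr_mult n g h)"
proof (rule ext)
  fix k assume n: "n > 0"
  show "gr_mult n (gr_mult n f g) h k = gr_mult n f (gr_mult n g h) k"
  proof (cases "k < n")
    case True
    then show ?thesis by (simp only: assoc_left[OF n True] assoc_right[OF n True])
  next
    case False
    then show ?thesis by (simp add: gm_ge)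
  qed
qed

lemma carrier_iff: "f \<in> gr_carrier n \<longleftrightarrow> (\<forall>k\<ge>n. f k = 0)"
  by (simp add: gr_carrier_def)

lemma one_carrier: "n > 0 \<Longrightarrow> gr_one n \<in> gr_carrier n"
  by (simp add: gr_one_def gr_carrier_def)

lemma gm_one_left:
  assumes n: "n > 0" and f: "f \<in> gr_carrier n"
  shows "gr_mult n (gr_one n) f = f"
proof (rule ext)
  fix k show "gr_mult n (gr_one n) f k = f k"
  proof (cases "k < n")
    case True
    have "gr_mult n (gr_one n) f k = (\<Sum>i<n. if i = 0 then (\<Sum>j<n. if (i + j) mod n = k then f j else 0) else 0)"
      unfolding gm_lt[OF True] by (intro sum.cong refl) (auto simp: gr_one_def intro!: sum.neutral)
    also have "\<dots> = (\<Sum>j<n. if j mod n = k then f j else 0)" using n by simp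
    also have "\<dots> = (\<Sum>j<n. if j = k then f j else 0)" by (intro sum.cong refl) simp
    also have "\<dots> = f k" using True by simp
    finally show ?thesis .
  next
    case False then show ?thesis using f by (simp add: gm_ge carrier_iff)
  qed
qed

lemma gm_one_right:
  assumes n: "n > 0" and f: "f \<in> gr_carrier n"
  shows "gr_mult n f (gr_one n) = f"
proof (rule ext)
  fix k show "gr_mult n f (gr_one n) k = f k"
  proof (cases "k < n")
    case True
    have "gr_mult n f (gr_one n) k = (\<Sum>i<n. \<Sum>j<n. if j = 0 then (if (i + j) mod n = k then f i else 0) else 0)"
      unfolding gm_lt[OF True] by (intro sum.cong refl) (auto simp: gr_one_def)
    also have "\<dots> = (\<Sum>i<n. if i mod n = k then f i else 0)" using n by (intro sum.cong refl) (simp add: sum.delta)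
    also have "\<dots> = (\<Sum>i<n. if i = k then f i else 0)" by (intro sum.cong refl) simp
    also have "\<dots> = f k" using True by simp
    finally show ?thesis .
  next
    case False then show ?thesis using f by (simp add: gm_ge carrier_iff)
  qed
qed

lemma gm_distr_left: "gr_mult n f (\<lambda>l. g l + h l) = (\<lambda>l. gr_mult n f g l + gr_mult n f h l)"
  by (rule ext) (auto simp: gr_mult_def distrib_left sum.distrib[symmetric] intro!: sum.cong)

lemma gm_distr_right: "gr_mult n (\<lambda>l. f l + g l) h = (\<lambda>l. gr_mult n f h l + gr_mult n g h l)"
  by (rule ext) (auto simp: gr_mult_def distrib_right sum.distrib[symmetric] intro!: sum.cong)

lemma gm_scal_left: "gr_mult n (\<lambda>l. c * f l) g = (\<lambda>l. c * gr_mult n f g l)"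
  by (rule ext) (auto simp: gr_mult_def sum_distrib_left mult.assoc intro!: sum.cong)

lemma gm_scal_right: "gr_mult n f (\<lambda>l. g l * c) = (\<lambda>l. gr_mult n f g l * c)"
  by (rule ext) (auto simp: gr_mult_def sum_distrib_right mult.assoc intro!: sum.cong)

lemma gm_sum_left: "gr_mult n (\<lambda>l. \<Sum>k\<in>K. F k l) g = (\<lambda>l. \<Sum>k\<in>K. gr_mult n (F k) g l)"
proof (rule ext)
  fix l
  show "gr_mult n (\<lambda>l. \<Sum>k\<in>K. F k l) g l = (\<Sum>k\<in>K. gr_mult n (F k) g l)"
  proof (cases "l < n")
    case True
    have "gr_mult n (\<lambda>l. \<Sum>k\<in>K. F k l) g l = (\<Sum>i<n. \<Sum>j<n. \<Sum>k\<in>K. if (i + j) mod n = l then F k i * g j else 0)"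
      unfolding gm_lt[OF True] by (intro sum.cong refl) (auto simp: sum_distrib_right)
    also have "\<dots> = (\<Sum>k\<in>K. \<Sum>i<n. \<Sum>j<n. if (i + j) mod n = l then F k i * g j else 0)"
      by (rule swap3[symmetric])
    finally show ?thesis unfolding gm_lt[OF True] .
  qed (simp add: gm_ge)
qed

lemma gm_sum_right: "gr_mult n f (\<lambda>l. \<Sum>k\<in>K. G k l) = (\<lambda>l. \<Sum>k\<in>K. gr_mult n f (G k) l)"
proof (rule ext)
  fix l
  show "gr_mult n f (\<lambda>l. \<Sum>k\<in>K. G k l) l = (\<Sum>k\<in>K. gr_mult n f (G k) l)"
  proof (cases "l < n")
    case True
    have "gr_mult n f (\<lambda>l. \<Sum>k\<in>K. G k l) l = (\<Sum>i<n. \<Sum>j<n. \<Sum>k\<in>K. if (i + j) mod n = l then f i * G k j else 0)"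
      unfolding gm_lt[OF True] by (intro sum.cong refl) (auto simp: sum_distrib_left)
    also have "\<dots> = (\<Sum>k\<in>K. \<Sum>i<n. \<Sum>j<n. if (i + j) mod n = l then f i * G k j else 0)"
      by (rule swap3[symmetric])
    finally show ?thesis unfolding gm_lt[OF True] .
  qed (simp add: gm_ge)
qed

definition SR :: "nat \<Rightarrow> (nat \<Rightarrow> 'a::ring_1) ring" where
  "SR n = \<lparr>carrier = gr_carrier n, mult = gr_mult n, one = gr_one n, zero = (\<lambda>_. 0),
           add = (\<lambda>f g l. f l + g l)\<rparr>"

lemma SR_simps [simp]:
  "carrier (SR n) = gr_carrier n" "mult (SR n) = gr_mult n" "one (SR n) = gr_one n"
  "zero (SR n) = (\<lambda>_. 0)" "add (SR n) = (\<lambda>f g l. f l + g l)"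
  by (simp_all add: SR_def)

lemma SR_ring: assumes n: "n > 0" shows "ring (SR n :: (nat \<Rightarrow> 'a::ring_1) ring)"
proof (rule ringI)
  show "abelian_group (SR n :: (nat \<Rightarrow> 'a::ring_1) ring)"
  proof (rule abelian_groupI)
    fix x :: "nat \<Rightarrow> 'a"
    assume "x \<in> carrier (SR n)"
    then show "\<exists>y\<in>carrier (SR n). y \<oplus>\<^bsub>SR n\<^esub> x = \<zero>\<^bsub>SR n\<^esub>"
      by (intro bexI[of _ "\<lambda>l. - x l"]) (auto simp: carrier_iff)
  qed (auto simp: carrier_iff add.assoc add.commute)
  show "monoid (SR n :: (nat \<Rightarrow> 'a::ring_1) ring)"
    by (rule monoidI) (auto simp: gm_carrier one_carrier n gm_assoc gm_one_left gm_one_right)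
qed (auto simp: gm_distr_left gm_distr_right)

lemma SR_neg: assumes n: "n > 0" and f: "f \<in> gr_carrier n"
  shows "\<ominus>\<^bsub>SR n\<^esub> f = (\<lambda>l. - f l)"
proof -
  interpret ring "SR n :: (nat \<Rightarrow> 'a::ring_1) ring" by (rule SR_ring[OF n])
  show ?thesis
    by (rule minus_equality) (use f in \<open>auto simp: carrier_iff\<close>)
qed

lemma SR_minus: assumes n: "n > 0" and f: "f \<in> gr_carrier n" and g: "g \<in> gr_carrier n"
  shows "f \<ominus>\<^bsub>SR n\<^esub> g = (\<lambda>l. f l - g l)"
  using SR_neg[OF n g] by (simp add: a_minus_def)

definition II :: "nat \<Rightarrow> (nat \<Rightarrow> 'a::ring_1) set" where
  "II n = {f \<in> gr_carrier n. \<forall>k. f k \<in> jacobson}"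

lemma II_left: "w \<in> II n \<Longrightarrow> gr_mult n f w \<in> II n"
  using gm_carrier[of n f w] by (auto simp: II_def gr_mult_def intro!: J_sum J_lmult J_zero)

lemma II_right: "local_ring TYPE('a::ring_1) \<Longrightarrow> (w :: nat \<Rightarrow> 'a) \<in> II n \<Longrightarrow> gr_mult n w f \<in> II n"
  using gm_carrier[of n w f] by (auto simp: II_def gr_mult_def intro!: J_sum J_rmult J_zero)

lemma II_ideal: assumes n: "n > 0" and loc: "local_ring TYPE('a::ring_1)"
  shows "ideal (II n) (SR n :: (nat \<Rightarrow> 'a) ring)"
proof -
  interpret ring "SR n :: (nat \<Rightarrow> 'a::ring_1) ring" by (rule SR_ring[OF n])
  show ?thesis
  proof (rule idealI)
    show "ring (SR n :: (nat \<Rightarrow> 'a::ring_1) ring)" by (rule SR_ring[OF n])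
    show "subgroup (II n) (add_monoid (SR n :: (nat \<Rightarrow> 'a) ring))"
    proof (rule add.subgroupI)
      show "II n \<subseteq> carrier (SR n)" by (auto simp: II_def)
      show "II n \<noteq> {}" using J_zero by (auto simp: II_def carrier_iff intro!: exI[of _ "\<lambda>_. 0"])
      fix a :: "nat \<Rightarrow> 'a" assume "a \<in> II n"
      then have "a \<in> gr_carrier n" by (simp add: II_def)
      then show "\<ominus>\<^bsub>SR n\<^esub> a \<in> II n" using \<open>a \<in> II n\<close> unfolding SR_neg[OF n \<open>a \<in> gr_carrier n\<close>] by (auto simp: II_def carrier_iff J_neg)
    next
      fix a b :: "nat \<Rightarrow> 'a" assume "a \<in> II n" "b \<in> II n"
      then show "a \<oplus>\<^bsub>SR n\<^esub> b \<in> II n" by (auto simp: II_def carrier_iff J_add)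
    qed
  qed (auto simp: II_left II_right[OF loc])
qed

definition delta :: "nat \<Rightarrow> nat \<Rightarrow> 'a::ring_1" where
  "delta k = (\<lambda>j. if j = k then 1 else 0)"

lemma claim_step:
  fixes y :: "nat \<Rightarrow> 'a::ring_1"
  assumes n: "n > 0" and k: "k < n"
    and P: "\<forall>s\<in>gr_carrier n. \<exists>q\<in>gr_carrier n. \<exists>c\<in>II n. (\<forall>j\<ge>Suc k. c j = 0) \<and> s = (\<lambda>l. gr_mult n q y l + c l)"
  shows "\<forall>s\<in>gr_carrier n. \<exists>q\<in>gr_carrier n. \<exists>c\<in>II n. (\<forall>j\<ge>k. c j = 0) \<and> s = (\<lambda>l. gr_mult n q y l + c l)"
proof
  fix s :: "nat \<Rightarrow> 'a" assume s: "s \<in> gr_carrier n"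
  obtain q c where q: "q \<in> gr_carrier n" and c: "c \<in> II n" "\<forall>j\<ge>Suc k. c j = 0"
    and sq: "s = (\<lambda>l. gr_mult n q y l + c l)" using P s by blast
  have dk: "delta k \<in> gr_carrier n" using k by (auto simp: delta_def carrier_iff)
  obtain q' d where q': "q' \<in> gr_carrier n" and d: "d \<in> II n" "\<forall>j\<ge>Suc k. d j = 0"
    and dq: "delta k = (\<lambda>l. gr_mult n q' y l + d l)" using P dk by blast
  have "d k \<in> jacobson" using d by (auto simp: II_def)
  then obtain e where e: "e * (1 - d k) = 1" using J_unit by blast
  define d' where "d' = (\<lambda>l. if l = k then 0 else d l)"
  define c' where "c' = (\<lambda>l. if l = k then 0 else c l)"
  have dpt: "\<And>l. delta k l = e * gr_mult n q' y l + e * d' l"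
  proof -
    fix l
    have h: "gr_mult n q' y l = delta k l - d l" using fun_cong[OF dq, of l] by (simp add: algebra_simps)
    show "delta k l = e * gr_mult n q' y l + e * d' l"
      unfolding h using e by (simp add: delta_def d'_def algebra_simps)
  qed
  define q'' where "q'' = (\<lambda>l. q l + c k * (e * q' l))"
  define c'' where "c'' = (\<lambda>l. c k * (e * d' l) + c' l)"
  have mq: "gr_mult n q'' y = (\<lambda>l. gr_mult n q y l + c k * (e * gr_mult n q' y l))"
    unfolding q''_def gm_distr_right gm_scal_left by simp
  show "\<exists>q\<in>gr_carrier n. \<exists>c\<in>II n. (\<forall>j\<ge>k. c j = 0) \<and> s = (\<lambda>l. gr_mult n q y l + c l)"
  proof (intro bexI conjI)
    show "q'' \<in> gr_carrier n" using q q' by (auto simp: q''_def carrier_iff)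
    show "c'' \<in> II n" using c d k
      by (auto simp: c''_def c'_def d'_def II_def carrier_iff intro!: J_add J_lmult J_zero)
    show "\<forall>j\<ge>k. c'' j = 0" using c d by (auto simp: c''_def c'_def d'_def)
    show "s = (\<lambda>l. gr_mult n q'' y l + c'' l)"
    proof (rule ext)
      fix l
      have "c l = c k * delta k l + c' l" by (simp add: delta_def c'_def)
      also have "\<dots> = c k * (e * gr_mult n q' y l) + c k * (e * d' l) + c' l"
        unfolding dpt by (simp add: algebra_simps)
      finally show "s l = gr_mult n q'' y l + c'' l"
        unfolding sq mq c''_def by (simp add: algebra_simps)
    qed
  qed
qed

lemma left_inv_II:
  fixes y :: "nat \<Rightarrow> 'a::ring_1"
  assumes n: "n > 0" and y: "y \<in> gr_carrier n" and w: "(\<lambda>l. y l - gr_one n l) \<in> II n"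
  shows "\<exists>z\<in>gr_carrier n. gr_mult n z y = gr_one n"
proof -
  define w where "w = (\<lambda>l. y l - gr_one n l)"
  have yw: "y = (\<lambda>l. gr_one n l + w l)" by (simp add: w_def)
  have base: "\<forall>s\<in>gr_carrier n. \<exists>q\<in>gr_carrier n. \<exists>c\<in>II n. (\<forall>j\<ge>n. c j = 0) \<and> s = (\<lambda>l. gr_mult n q y l + c l)"
  proof
    fix s :: "nat \<Rightarrow> 'a" assume s: "s \<in> gr_carrier n"
    have sw: "gr_mult n s w \<in> II n" using II_left w w_def by blast
    have "gr_mult n s y = (\<lambda>l. s l + gr_mult n s w l)"
      unfolding yw gm_distr_left gm_one_right[OF n s] by simp
    then show "\<exists>q\<in>gr_carrier n. \<exists>c\<in>II n. (\<forall>j\<ge>n. c j = 0) \<and> s = (\<lambda>l. gr_mult n q y l + c l)"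
      using s sw
      by (intro bexI[of _ s] bexI[of _ "\<lambda>l. - gr_mult n s w l"])
         (auto simp: II_def carrier_iff J_neg gm_ge)
  qed
  have "\<forall>m. m \<le> n \<longrightarrow> (\<forall>s\<in>gr_carrier n. \<exists>q\<in>gr_carrier n. \<exists>c\<in>II n. (\<forall>j\<ge>n - m. c j = 0) \<and> s = (\<lambda>l. gr_mult n q y l + c l))"
  proof (intro allI)
    fix m show "m \<le> n \<longrightarrow> (\<forall>s\<in>gr_carrier n. \<exists>q\<in>gr_carrier n. \<exists>c\<in>II n. (\<forall>j\<ge>n - m. c j = 0) \<and> s = (\<lambda>l. gr_mult n q y l + c l))"
    proof (induction m)
      case 0 then show ?case using base by simp
    next
      case (Suc m)
      show ?case
      proof
        assume m: "Suc m \<le> n"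
        have e: "Suc (n - Suc m) = n - m" using m by simp
        show "\<forall>s\<in>gr_carrier n. \<exists>q\<in>gr_carrier n. \<exists>c\<in>II n. (\<forall>j\<ge>n - Suc m. c j = 0) \<and> s = (\<lambda>l. gr_mult n q y l + c l)"
          by (rule claim_step[OF n]) (use m Suc.IH e in auto)
      qed
    qed
  qed
  then have "\<forall>s\<in>gr_carrier n. \<exists>q\<in>gr_carrier n. \<exists>c\<in>II n. (\<forall>j\<ge>0. c j = 0) \<and> s = (\<lambda>l. gr_mult n q y l + c l)"
    by (metis diff_self_eq_0 order_refl)
  from bspec[OF this one_carrier[OF n]] obtain q c where q: "q \<in> gr_carrier n" and c: "\<forall>j\<ge>0. c j = 0"
    and e: "gr_one n = (\<lambda>l. gr_mult n q y l + c l)" by blast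
  have "c = (\<lambda>_. 0)" using c by auto
  then have "gr_mult n q y = gr_one n" using e by simp
  then show ?thesis using q by blast
qed

lemma unit_II:
  fixes y :: "nat \<Rightarrow> 'a::ring_1"
  assumes n: "n > 0" and y: "y \<in> gr_carrier n" and w: "(\<lambda>l. y l - gr_one n l) \<in> II n"
  shows "\<exists>z\<in>gr_carrier n. gr_mult n z y = gr_one n \<and> gr_mult n y z = gr_one n"
proof -
  obtain z where z: "z \<in> gr_carrier n" and zy: "gr_mult n z y = gr_one n" using left_inv_II[OF n y w] by blast
  define w where "w = (\<lambda>l. y l - gr_one n l)"
  have yw: "y = (\<lambda>l. gr_one n l + w l)" by (simp add: w_def)
  have "gr_one n = (\<lambda>l. z l + gr_mult n z w l)"
    using zy unfolding yw gm_distr_left gm_one_right[OF n z] by simp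
  then have "(\<lambda>l. z l - gr_one n l) = (\<lambda>l. - gr_mult n z w l)" by (metis add_diff_cancel_left' minus_diff_eq)
  moreover have "(\<lambda>l. - gr_mult n z w l) \<in> II n"
    using II_left[of w n z] w w_def by (auto simp: II_def carrier_iff J_neg gm_ge)
  ultimately obtain z' where z': "z' \<in> gr_carrier n" "gr_mult n z' z = gr_one n"
    using left_inv_II[OF n z] by auto
  have "z' = gr_mult n z' (gr_mult n z y)" using zy gm_one_right[OF n z'(1)] by simp
  also have "\<dots> = y" using gm_assoc[OF n] z'(2) gm_one_left[OF n y] by metis
  finally have "gr_mult n y z = gr_one n" using z' by simp
  then show ?thesis using z zy by blast
qed

lemma steinitz_left:
  fixes v :: "nat \<Rightarrow> nat \<Rightarrow> 'a::ring_1"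
  assumes loc: "local_ring TYPE('a)"
  shows "finite K \<Longrightarrow> card K = Suc m \<Longrightarrow> (\<forall>k\<in>K. \<forall>l\<ge>m. v k l \<in> jacobson) \<Longrightarrow>
    \<exists>c. (\<exists>k\<in>K. c k \<notin> jacobson) \<and> (\<forall>l. (\<Sum>k\<in>K. c k * v k l) \<in> jacobson)"
proof (induction m arbitrary: K v)
  case 0
  then obtain k0 where K: "K = {k0}" by (auto simp: card_Suc_eq)
  show ?case using 0 K one_notin_J[OF loc] by (intro exI[of _ "\<lambda>_. 1"]) auto
next
  case (Suc m)
  have fK: "finite K" and cK: "card K = Suc (Suc m)" and hv: "\<forall>k\<in>K. \<forall>l\<ge>Suc m. v k l \<in> jacobson"
    using Suc.prems by auto
  show ?case
  proof (cases "\<forall>k\<in>K. v k m \<in> jacobson")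
    case True
    obtain k0 where k0: "k0 \<in> K" using cK by (metis card.empty ex_in_conv nat.simps(3))
    define K' where "K' = K - {k0}"
    have fK': "finite K'" "card K' = Suc m" using fK cK k0 by (auto simp: K'_def)
    have "\<forall>k\<in>K'. \<forall>l\<ge>m. v k l \<in> jacobson"
      using True hv by (auto simp: K'_def) (metis le_antisym not_less_eq_eq)
    from Suc.IH[OF fK' this] obtain c' where c': "\<exists>k\<in>K'. c' k \<notin> jacobson"
      "\<forall>l. (\<Sum>k\<in>K'. c' k * v k l) \<in> jacobson" by blast
    define c where "c = c'(k0 := 0)"
    have "\<And>l. (\<Sum>k\<in>K. c k * v k l) = (\<Sum>k\<in>K'. c' k * v k l)"
    proof -
      fix l
      have "(\<Sum>k\<in>K. c k * v k l) = c k0 * v k0 l + (\<Sum>k\<in>K'. c k * v k l)"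
        using fK k0 by (simp add: K'_def sum.remove)
      also have "\<dots> = (\<Sum>k\<in>K'. c' k * v k l)" by (simp add: c_def K'_def)
      finally show "(\<Sum>k\<in>K. c k * v k l) = (\<Sum>k\<in>K'. c' k * v k l)" .
    qed
    moreover have "\<exists>k\<in>K. c k \<notin> jacobson" using c' by (auto simp: c_def K'_def)
    ultimately show ?thesis using c' by metis
  next
    case False
    then obtain p where p: "p \<in> K" "v p m \<notin> jacobson" by blast
    obtain u where u: "v p m * u = 1" "u * v p m = 1" using nonJ_unit[OF loc p(2)] by blast
    define K' where "K' = K - {p}"
    have fK': "finite K'" "card K' = Suc m" using fK cK p by (auto simp: K'_def)
    define w where "w = (\<lambda>k l. v k l - v k m * u * v p l)"
    have "\<forall>k\<in>K'. \<forall>l\<ge>m. w k l \<in> jacobson"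
    proof (intro ballI allI impI)
      fix k l assume k: "k \<in> K'" and l: "m \<le> l"
      show "w k l \<in> jacobson"
      proof (cases "l = m")
        case True
        then have "w k l = 0" using u by (simp add: w_def mult.assoc)
        then show ?thesis using J_zero by simp
      next
        case False
        then have "v k l \<in> jacobson" "v p l \<in> jacobson" using hv k p l by (auto simp: K'_def)
        then show ?thesis unfolding w_def by (intro J_diff J_lmult)
      qed
    qed
    from Suc.IH[OF fK' this] obtain c' where c': "\<exists>k\<in>K'. c' k \<notin> jacobson"
      "\<forall>l. (\<Sum>k\<in>K'. c' k * w k l) \<in> jacobson" by blast
    define c where "c = c'(p := - (\<Sum>k\<in>K'. c' k * v k m * u))"
    have "\<And>l. (\<Sum>k\<in>K. c k * v k l) = (\<Sum>k\<in>K'. c' k * w k l)"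
    proof -
      fix l
      have "(\<Sum>k\<in>K. c k * v k l) = c p * v p l + (\<Sum>k\<in>K'. c k * v k l)"
        using fK p by (simp add: K'_def sum.remove)
      also have "\<dots> = - (\<Sum>k\<in>K'. c' k * v k m * u * v p l) + (\<Sum>k\<in>K'. c' k * v k l)"
        by (simp add: c_def K'_def sum_distrib_right)
      also have "\<dots> = (\<Sum>k\<in>K'. c' k * w k l)"
        by (simp add: w_def right_diff_distrib sum_subtractf mult.assoc)
      finally show "(\<Sum>k\<in>K. c k * v k l) = (\<Sum>k\<in>K'. c' k * w k l)" .
    qed
    moreover have "\<exists>k\<in>K. c k \<notin> jacobson" using c' by (auto simp: c_def K'_def)
    ultimately show ?thesis using c' by metis
  qed
qed

lemma steinitz_right:
  fixes v :: "nat \<Rightarrow> nat \<Rightarrow> 'a::ring_1"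
  assumes loc: "local_ring TYPE('a)"
  shows "finite K \<Longrightarrow> card K = Suc m \<Longrightarrow> (\<forall>k\<in>K. \<forall>l\<ge>m. v k l \<in> jacobson) \<Longrightarrow>
    \<exists>c. (\<exists>k\<in>K. c k \<notin> jacobson) \<and> (\<forall>l. (\<Sum>k\<in>K. v k l * c k) \<in> jacobson)"
proof (induction m arbitrary: K v)
  case 0
  then obtain k0 where K: "K = {k0}" by (auto simp: card_Suc_eq)
  show ?case using 0 K one_notin_J[OF loc] by (intro exI[of _ "\<lambda>_. 1"]) auto
next
  case (Suc m)
  have fK: "finite K" and cK: "card K = Suc (Suc m)" and hv: "\<forall>k\<in>K. \<forall>l\<ge>Suc m. v k l \<in> jacobson"
    using Suc.prems by auto
  show ?case
  proof (cases "\<forall>k\<in>K. v k m \<in> jacobson")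
    case True
    obtain k0 where k0: "k0 \<in> K" using cK by (metis card.empty ex_in_conv nat.simps(3))
    define K' where "K' = K - {k0}"
    have fK': "finite K'" "card K' = Suc m" using fK cK k0 by (auto simp: K'_def)
    have "\<forall>k\<in>K'. \<forall>l\<ge>m. v k l \<in> jacobson"
      using True hv by (auto simp: K'_def) (metis le_antisym not_less_eq_eq)
    from Suc.IH[OF fK' this] obtain c' where c': "\<exists>k\<in>K'. c' k \<notin> jacobson"
      "\<forall>l. (\<Sum>k\<in>K'. v k l * c' k) \<in> jacobson" by blast
    define c where "c = c'(k0 := 0)"
    have "\<And>l. (\<Sum>k\<in>K. v k l * c k) = (\<Sum>k\<in>K'. v k l * c' k)"
    proof -
      fix l
      have "(\<Sum>k\<in>K. v k l * c k) = v k0 l * c k0 + (\<Sum>k\<in>K'. v k l * c k)"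
        using fK k0 by (simp add: K'_def sum.remove)
      also have "\<dots> = (\<Sum>k\<in>K'. v k l * c' k)" by (simp add: c_def K'_def)
      finally show "(\<Sum>k\<in>K. v k l * c k) = (\<Sum>k\<in>K'. v k l * c' k)" .
    qed
    moreover have "\<exists>k\<in>K. c k \<notin> jacobson" using c' by (auto simp: c_def K'_def)
    ultimately show ?thesis using c' by metis
  next
    case False
    then obtain p where p: "p \<in> K" "v p m \<notin> jacobson" by blast
    obtain u where u: "v p m * u = 1" "u * v p m = 1" using nonJ_unit[OF loc p(2)] by blast
    define K' where "K' = K - {p}"
    have fK': "finite K'" "card K' = Suc m" using fK cK p by (auto simp: K'_def)
    define w where "w = (\<lambda>k l. v k l - v p l * u * v k m)"
    have "\<forall>k\<in>K'. \<forall>l\<ge>m. w k l \<in> jacobson"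
    proof (intro ballI allI impI)
      fix k l assume k: "k \<in> K'" and l: "m \<le> l"
      show "w k l \<in> jacobson"
      proof (cases "l = m")
        case True
        then have "w k l = 0" using u by (simp add: w_def)
        then show ?thesis using J_zero by simp
      next
        case False
        then have "v k l \<in> jacobson" "v p l \<in> jacobson" using hv k p l by (auto simp: K'_def)
        then show ?thesis unfolding w_def by (intro J_diff J_rmult[OF loc])
      qed
    qed
    from Suc.IH[OF fK' this] obtain c' where c': "\<exists>k\<in>K'. c' k \<notin> jacobson"
      "\<forall>l. (\<Sum>k\<in>K'. w k l * c' k) \<in> jacobson" by blast
    define c where "c = c'(p := - (\<Sum>k\<in>K'. u * v k m * c' k))"
    have "\<And>l. (\<Sum>k\<in>K. v k l * c k) = (\<Sum>k\<in>K'. w k l * c' k)"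
    proof -
      fix l
      have "(\<Sum>k\<in>K. v k l * c k) = v p l * c p + (\<Sum>k\<in>K'. v k l * c k)"
        using fK p by (simp add: K'_def sum.remove)
      also have "\<dots> = - (\<Sum>k\<in>K'. v p l * (u * v k m * c' k)) + (\<Sum>k\<in>K'. v k l * c' k)"
        by (simp add: c_def K'_def sum_distrib_left)
      also have "\<dots> = (\<Sum>k\<in>K'. w k l * c' k)"
        by (simp add: w_def left_diff_distrib sum_subtractf mult.assoc)
      finally show "(\<Sum>k\<in>K. v k l * c k) = (\<Sum>k\<in>K'. w k l * c' k)" .
    qed
    moreover have "\<exists>k\<in>K. c k \<notin> jacobson" using c' by (auto simp: c_def K'_def)
    ultimately show ?thesis using c' by metis
  qed
qed

locale dz = ring +
  fixes x a b t :: 'a and k :: nat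
  assumes x[simp]: "x \<in> carrier R" and a[simp]: "a \<in> carrier R" and b[simp]: "b \<in> carrier R"
    and t[simp]: "t \<in> carrier R"
    and ha: "x [^] k = a \<otimes> x [^] Suc k" and hb: "x [^] k = x [^] Suc k \<otimes> b"
    and t1: "t \<otimes> (\<one> \<oplus> \<one>) = \<one>" and t2: "(\<one> \<oplus> \<one>) \<otimes> t = \<one>"
begin

lemma pa: "x [^] k = a [^] m \<otimes> x [^] (k + m)"
proof (induction m)
  case 0 then show ?case by simp
next
  case (Suc m)
  have "a [^] Suc m \<otimes> x [^] (k + Suc m) = (a [^] m \<otimes> a) \<otimes> (x [^] Suc k \<otimes> x [^] m)"
    by (simp only: nat_pow_Suc[of a] nat_pow_mult[OF x]) simp
  also have "\<dots> = a [^] m \<otimes> ((a \<otimes> x [^] Suc k) \<otimes> x [^] m)" by (simp add: m_assoc)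
  also have "\<dots> = a [^] m \<otimes> x [^] (k + m)" by (simp only: ha[symmetric] nat_pow_mult[OF x])
  finally show ?case using Suc by simp
qed

lemma pb: "x [^] k = x [^] (k + m) \<otimes> b [^] m"
proof (induction m)
  case 0 then show ?case by simp
next
  case (Suc m)
  have "x [^] (k + Suc m) \<otimes> b [^] Suc m = (x [^] m \<otimes> x [^] Suc k) \<otimes> (b \<otimes> b [^] m)"
    by (simp only: nat_pow_Suc2[OF b, symmetric] nat_pow_mult[OF x]) (simp add: add.commute)
  also have "\<dots> = x [^] m \<otimes> ((x [^] Suc k \<otimes> b) \<otimes> b [^] m)" by (simp add: m_assoc)
  also have "\<dots> = x [^] (k + m) \<otimes> b [^] m" by (simp only: hb[symmetric] m_assoc[symmetric] nat_pow_closed x b nat_pow_mult[OF x] add.commute)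
  finally show ?case using Suc by simp
qed

definition "ee = a [^] k \<otimes> x [^] k"
definition "w2 = x [^] k \<otimes> b [^] Suc k"
definition "w1 = a [^] Suc k \<otimes> x [^] k"
definition "WW = ee \<otimes> w2"
definition "ff = \<one> \<ominus> ee"

lemma ee_c[simp]: "ee \<in> carrier R" by (simp add: ee_def)
lemma w1_c[simp]: "w1 \<in> carrier R" by (simp add: w1_def)
lemma w2_c[simp]: "w2 \<in> carrier R" by (simp add: w2_def)
lemma WW_c[simp]: "WW \<in> carrier R" by (simp add: WW_def)
lemma ff_c[simp]: "ff \<in> carrier R" by (simp add: ff_def)

lemma AX2: "a [^] k \<otimes> x [^] (k + k) = x [^] k" using pa[of k] by simp
lemma X2B: "x [^] (k + k) \<otimes> b [^] k = x [^] k" using pb[of k] by simp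

lemma e_alt: "ee = x [^] k \<otimes> b [^] k"
proof -
  have "ee = a [^] k \<otimes> (x [^] (k + k) \<otimes> b [^] k)" by (simp only: ee_def X2B)
  also have "\<dots> = (a [^] k \<otimes> x [^] (k + k)) \<otimes> b [^] k" by (simp add: m_assoc)
  finally show ?thesis by (simp only: AX2)
qed

lemma ee_idem: "ee \<otimes> ee = ee"
proof -
  have "ee \<otimes> ee = (a [^] k \<otimes> x [^] k) \<otimes> (x [^] k \<otimes> b [^] k)"
    by (simp only: ee_def[symmetric] e_alt[symmetric])
  also have "\<dots> = a [^] k \<otimes> ((x [^] k \<otimes> x [^] k) \<otimes> b [^] k)" by (simp add: m_assoc)
  also have "\<dots> = a [^] k \<otimes> x [^] k" by (simp only: nat_pow_mult[OF x] X2B)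
  finally show ?thesis by (simp only: ee_def)
qed

lemma ee_X: "ee \<otimes> x [^] k = x [^] k"
proof -
  have "ee \<otimes> x [^] k = a [^] k \<otimes> (x [^] k \<otimes> x [^] k)" by (simp add: ee_def m_assoc)
  also have "\<dots> = x [^] k" by (simp only: nat_pow_mult[OF x] AX2)
  finally show ?thesis .
qed

lemma ee_x: "ee \<otimes> x = x \<otimes> ee"
proof -
  have l: "ee \<otimes> x = a [^] k \<otimes> x [^] Suc k" by (simp add: ee_def m_assoc)
  have r: "x \<otimes> ee = x [^] Suc k \<otimes> b [^] k"
    by (simp add: e_alt m_assoc[symmetric] nat_pow_Suc2[OF x, symmetric] del: nat_pow_Suc)
  have "x [^] Suc k = x \<otimes> (x [^] (k + k) \<otimes> b [^] k)" by (simp only: X2B nat_pow_Suc2[OF x])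
  also have "\<dots> = (x [^] (k + k) \<otimes> x) \<otimes> b [^] k"
    by (simp add: m_assoc[symmetric] nat_pow_Suc2[OF x, symmetric] del: nat_pow_Suc)
  finally have xs: "x [^] Suc k = (x [^] (k + k) \<otimes> x) \<otimes> b [^] k" .
  have "a [^] k \<otimes> x [^] Suc k = ((a [^] k \<otimes> x [^] (k + k)) \<otimes> x) \<otimes> b [^] k"
    by (simp only: xs) (simp add: m_assoc)
  also have "\<dots> = x [^] Suc k \<otimes> b [^] k" by (simp only: AX2 nat_pow_Suc)
  finally show ?thesis using l r by simp
qed

lemma w1_x: "w1 \<otimes> x = ee"
proof -
  have "w1 \<otimes> x = a [^] k \<otimes> (a \<otimes> x [^] Suc k)" by (simp add: w1_def m_assoc)
  then show ?thesis by (simp only: ha[symmetric] ee_def)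
qed

lemma x_w2: "x \<otimes> w2 = ee"
proof -
  have "x \<otimes> w2 = ((x \<otimes> x [^] k) \<otimes> b) \<otimes> b [^] k"
    by (simp only: w2_def nat_pow_Suc2[OF b]) (simp add: m_assoc)
  also have "\<dots> = (x [^] Suc k \<otimes> b) \<otimes> b [^] k" by (simp only: nat_pow_Suc2[OF x, symmetric])
  finally show ?thesis by (simp only: hb[symmetric] e_alt)
qed

lemma WW_alt: "WW = w1 \<otimes> ee"
proof -
  have "w1 \<otimes> ee = w1 \<otimes> (x \<otimes> w2)" by (simp only: x_w2)
  also have "\<dots> = (w1 \<otimes> x) \<otimes> w2" by (simp add: m_assoc)
  finally show ?thesis by (simp only: w1_x WW_def)
qed

lemma WW_x: "WW \<otimes> x = ee"
proof -
  have "WW \<otimes> x = w1 \<otimes> (ee \<otimes> x)" by (simp add: WW_alt m_assoc)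
  also have "\<dots> = (w1 \<otimes> x) \<otimes> ee" by (simp add: ee_x m_assoc)
  finally show ?thesis by (simp add: w1_x ee_idem)
qed

lemma x_WW: "x \<otimes> WW = ee"
proof -
  have "x \<otimes> WW = (x \<otimes> ee) \<otimes> w2" by (simp add: WW_def m_assoc)
  also have "\<dots> = ee \<otimes> (x \<otimes> w2)" by (simp add: ee_x[symmetric] m_assoc)
  finally show ?thesis by (simp add: x_w2 ee_idem)
qed

lemma WW_ee: "WW \<otimes> ee = WW"
  by (simp add: WW_alt m_assoc ee_idem)

lemma ee_WW: "ee \<otimes> WW = WW"
  by (simp add: WW_def m_assoc[symmetric] ee_idem)

lemma ee_ff: "ee \<otimes> ff = \<zero>"
  by (simp add: ff_def ee_idem r_distr minus_eq r_minus r_neg)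

lemma ff_ee: "ff \<otimes> ee = \<zero>"
  by (simp add: ff_def ee_idem l_distr minus_eq l_minus r_neg)

lemma ff_ff: "ff \<otimes> ff = ff"
  by (subst (1) ff_def) (simp add: minus_eq l_distr l_minus ee_ff)

lemma ff_x: "ff \<otimes> x = x \<otimes> ff"
  by (simp add: ff_def l_distr r_distr minus_eq l_minus r_minus ee_x)

lemma ee_ff_sum: "ee \<oplus> ff = \<one>"
proof -
  have "ee \<oplus> ff = (ee \<oplus> \<ominus> ee) \<oplus> \<one>" unfolding ff_def by (simp add: minus_eq a_ac)
  then show ?thesis by (simp add: r_neg)
qed

lemma WW_ff: "WW \<otimes> ff = \<zero>"
  by (subst WW_ee[symmetric]) (simp add: m_assoc ee_ff)

lemma ff_WW: "ff \<otimes> WW = \<zero>"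
  by (subst ee_WW[symmetric]) (simp add: m_assoc[symmetric] ff_ee)

lemma ff_X: "ff \<otimes> x [^] k = \<zero>"
  by (simp add: ff_def l_distr minus_eq l_minus ee_X r_neg)

lemma t_comm: "y \<in> carrier R \<Longrightarrow> t \<otimes> y = y \<otimes> t"
proof -
  assume y: "y \<in> carrier R"
  have y2: "y \<otimes> (\<one> \<oplus> \<one>) = (\<one> \<oplus> \<one>) \<otimes> y" using y by (simp add: l_distr r_distr)
  have "t \<otimes> y = t \<otimes> (y \<otimes> ((\<one> \<oplus> \<one>) \<otimes> t))" using y by (simp add: t2)
  also have "\<dots> = t \<otimes> ((y \<otimes> (\<one> \<oplus> \<one>)) \<otimes> t)" using y by (simp add: m_assoc)
  also have "\<dots> = (t \<otimes> (\<one> \<oplus> \<one>)) \<otimes> (y \<otimes> t)" using y by (simp only: y2) (simp add: m_assoc)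
  finally show ?thesis using y by (simp add: t1)
qed

lemma tt: "y \<in> carrier R \<Longrightarrow> t \<otimes> y \<oplus> t \<otimes> y = y"
proof -
  assume y: "y \<in> carrier R"
  have "t \<otimes> y \<oplus> t \<otimes> y = (t \<otimes> (\<one> \<oplus> \<one>)) \<otimes> y" using y by (simp add: l_distr r_distr m_assoc)
  then show ?thesis using y by (simp add: t1)
qed

end

context dz begin

definition "zz = ff \<otimes> x"
lemma zz_c[simp]: "zz \<in> carrier R" by (simp add: zz_def)

lemmas rs = r_distr l_distr minus_eq r_minus l_minus m_assoc a_ac

lemma xpow_ff: "x [^] (m::nat) \<otimes> ff = ff \<otimes> x [^] m"
proof (induction m)
  case 0 then show ?case by simp
next
  case (Suc m)
  have "x [^] Suc m \<otimes> ff = x [^] m \<otimes> (x \<otimes> ff)" by (simp add: m_assoc)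
  also have "\<dots> = (x [^] m \<otimes> ff) \<otimes> x" by (simp add: ff_x[symmetric] m_assoc)
  also have "\<dots> = ff \<otimes> x [^] Suc m" by (simp add: Suc m_assoc)
  finally show ?case .
qed

lemma zz_pow: "zz [^] Suc m = ff \<otimes> x [^] Suc m"
proof (induction m)
  case 0 then show ?case by (simp add: zz_def)
next
  case (Suc m)
  have "zz [^] Suc (Suc m) = (ff \<otimes> x [^] Suc m) \<otimes> (ff \<otimes> x)"
    by (simp only: nat_pow_Suc[of zz "Suc m"] Suc) (simp only: zz_def)
  also have "\<dots> = ff \<otimes> ((x [^] Suc m \<otimes> ff) \<otimes> x)" by (simp add: m_assoc del: nat_pow_Suc)
  also have "\<dots> = (ff \<otimes> ff) \<otimes> (x [^] Suc m \<otimes> x)" by (simp only: xpow_ff) (simp add: m_assoc del: nat_pow_Suc)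
  also have "\<dots> = ff \<otimes> x [^] Suc (Suc m)" by (simp only: ff_ff nat_pow_Suc[of x "Suc m"])
  finally show ?case .
qed

lemma zz_nil: "zz [^] Suc k = \<zero>"
proof -
  have "zz [^] Suc k = (ff \<otimes> x [^] k) \<otimes> x" by (simp only: zz_pow nat_pow_Suc[of x k]) (simp add: m_assoc)
  then show ?thesis by (simp add: ff_X)
qed

definition "sg m = ((\<lambda>g. \<one> \<oplus> zz \<otimes> g) ^^ m) \<zero>"

lemma sg_Suc: "sg (Suc m) = \<one> \<oplus> zz \<otimes> sg m" by (simp add: sg_def)
lemma sg_c[simp]: "sg m \<in> carrier R" by (induction m) (simp_all add: sg_def)

lemma sg_comm: "zz \<otimes> sg m = sg m \<otimes> zz"
proof (induction m)
  case 0 then show ?case by (simp add: sg_def)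
next
  case (Suc m)
  have "sg (Suc m) \<otimes> zz = zz \<oplus> zz \<otimes> (sg m \<otimes> zz)" by (simp add: sg_Suc l_distr m_assoc)
  also have "\<dots> = zz \<otimes> sg (Suc m)" by (simp add: Suc[symmetric] sg_Suc r_distr m_assoc)
  finally show ?case by simp
qed

lemma sg_l: "(\<one> \<ominus> zz) \<otimes> sg m = \<one> \<ominus> zz [^] m"
proof (induction m)
  case 0 then show ?case by (simp add: sg_def r_neg minus_eq)
next
  case (Suc m)
  have "(\<one> \<ominus> zz) \<otimes> sg (Suc m) = (\<one> \<ominus> zz) \<oplus> zz \<otimes> ((\<one> \<ominus> zz) \<otimes> sg m)"
    by (simp add: sg_Suc rs)
  also have "\<dots> = \<one> \<ominus> zz [^] Suc m"
    by (simp only: Suc nat_pow_Suc2[OF zz_c]) (simp add: rs r_neg r_neg1 r_neg2)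
  finally show ?case .
qed

lemma sg_r: "sg m \<otimes> (\<one> \<ominus> zz) = \<one> \<ominus> zz [^] m"
proof -
  have "sg m \<otimes> (\<one> \<ominus> zz) = sg m \<ominus> sg m \<otimes> zz" by (simp add: rs)
  also have "\<dots> = sg m \<ominus> zz \<otimes> sg m" by (simp add: sg_comm)
  also have "\<dots> = (\<one> \<ominus> zz) \<otimes> sg m" by (simp add: rs)
  finally show ?thesis by (simp add: sg_l)
qed

definition "SS = sg (Suc k)"
lemma SS_c[simp]: "SS \<in> carrier R" by (simp add: SS_def)
lemma SS_l: "(\<one> \<ominus> zz) \<otimes> SS = \<one>" by (simp only: SS_def sg_l zz_nil) (simp add: minus_eq)
lemma SS_r: "SS \<otimes> (\<one> \<ominus> zz) = \<one>" by (simp only: SS_def sg_r zz_nil) (simp add: minus_eq)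

lemma ff_zz: "ff \<otimes> zz = zz" by (simp add: zz_def m_assoc[symmetric] ff_ff)
lemma zz_ff: "zz \<otimes> ff = zz" by (simp add: zz_def m_assoc ff_x[symmetric]) (simp add: m_assoc[symmetric] ff_ff)
lemma ee_zz: "ee \<otimes> zz = \<zero>" by (simp add: zz_def m_assoc[symmetric] ee_ff)
lemma zz_ee: "zz \<otimes> ee = \<zero>" by (simp add: zz_def m_assoc ee_x[symmetric]) (simp add: m_assoc[symmetric] ff_ee)
lemma zz_WW: "zz \<otimes> WW = \<zero>" by (simp add: zz_def m_assoc x_WW ff_ee)

lemma ff_1z: "ff \<otimes> (\<one> \<ominus> zz) = ff \<ominus> zz" by (simp add: rs ff_zz)
lemma z1_ff: "(\<one> \<ominus> zz) \<otimes> ff = ff \<ominus> zz" by (simp add: rs zz_ff)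
lemma ee_1z: "ee \<otimes> (\<one> \<ominus> zz) = ee" by (simp add: rs ee_zz)
lemma z1_ee: "(\<one> \<ominus> zz) \<otimes> ee = ee" by (simp add: rs zz_ee)
lemma z1_WW: "(\<one> \<ominus> zz) \<otimes> WW = WW" by (simp add: rs zz_WW)

lemma SS_ff: "SS \<otimes> ff = ff \<otimes> SS"
proof -
  have "SS \<otimes> ff = SS \<otimes> (ff \<otimes> ((\<one> \<ominus> zz) \<otimes> SS))" by (simp add: SS_l)
  also have "\<dots> = SS \<otimes> ((\<one> \<ominus> zz) \<otimes> ff) \<otimes> SS" by (simp add: ff_1z[symmetric] z1_ff m_assoc)
  also have "\<dots> = ff \<otimes> SS" by (simp add: m_assoc[symmetric] SS_r)
  finally show ?thesis .
qed

lemma SS_ee: "SS \<otimes> ee = ee"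
proof -
  have "SS \<otimes> ee = SS \<otimes> ((\<one> \<ominus> zz) \<otimes> ee)" by (simp add: z1_ee)
  also have "\<dots> = ee" by (simp add: m_assoc[symmetric] SS_r)
  finally show ?thesis .
qed

end

context dz begin

definition "TT = t \<otimes> (x \<otimes> ee)"
definition "QQ = WW \<oplus> WW"
definition "PP = ff \<otimes> (\<one> \<ominus> zz)"
lemma TT_c[simp]: "TT \<in> carrier R" by (simp add: TT_def)
lemma QQ_c[simp]: "QQ \<in> carrier R" by (simp add: QQ_def)
lemma PP_c[simp]: "PP \<in> carrier R" by (simp add: PP_def)

lemma t_left: "y \<in> carrier R \<Longrightarrow> z \<in> carrier R \<Longrightarrow> y \<otimes> (t \<otimes> z) = t \<otimes> (y \<otimes> z)"
proof -
  assume y: "y \<in> carrier R" and z: "z \<in> carrier R"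
  have "y \<otimes> (t \<otimes> z) = (y \<otimes> t) \<otimes> z" using y z by (simp add: m_assoc)
  also have "\<dots> = (t \<otimes> y) \<otimes> z" by (simp only: t_comm[OF y, symmetric])
  finally show ?thesis using y z by (simp add: m_assoc)
qed

lemma PP_alt: "PP = ff \<ominus> zz" by (simp only: PP_def ff_1z)

lemma TW: "TT \<otimes> WW = t \<otimes> ee" by (simp add: TT_def m_assoc ee_WW x_WW)
lemma WT: "WW \<otimes> TT = t \<otimes> ee"
  by (simp add: TT_def t_left) (simp add: m_assoc[symmetric] WW_x ee_idem)
lemma Tf: "TT \<otimes> ff = \<zero>" by (simp add: TT_def m_assoc ee_ff)
lemma fT: "ff \<otimes> TT = \<zero>"
  by (simp add: TT_def t_left) (simp add: m_assoc[symmetric] ff_x, simp add: m_assoc ff_ee)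
lemma TQ: "TT \<otimes> QQ = ee" by (simp add: QQ_def r_distr TW tt)
lemma QT: "QQ \<otimes> TT = ee" by (simp add: QQ_def l_distr WT tt)
lemma Qf: "QQ \<otimes> ff = \<zero>" by (simp add: QQ_def l_distr WW_ff)
lemma fQ: "ff \<otimes> QQ = \<zero>" by (simp add: QQ_def r_distr ff_WW)

lemma PW: "PP \<otimes> WW = \<zero>" by (simp add: PP_def m_assoc z1_WW ff_WW)
lemma WP: "WW \<otimes> PP = \<zero>" by (simp add: PP_def m_assoc[symmetric] WW_ff)
lemma PQ: "PP \<otimes> QQ = \<zero>" by (simp add: QQ_def r_distr PW)
lemma QP: "QQ \<otimes> PP = \<zero>" by (simp add: QQ_def l_distr WP)
lemma TfS: "TT \<otimes> (ff \<otimes> SS) = \<zero>" by (simp add: m_assoc[symmetric] Tf)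
lemma fST: "(ff \<otimes> SS) \<otimes> TT = \<zero>"
proof -
  have "(ff \<otimes> SS) \<otimes> TT = t \<otimes> (ff \<otimes> ((SS \<otimes> ee) \<otimes> x))"
    by (simp add: TT_def t_left ee_x[symmetric]) (simp add: m_assoc)
  then show ?thesis by (simp add: SS_ee m_assoc[symmetric] ff_ee)
qed
lemma PfS: "PP \<otimes> (ff \<otimes> SS) = ff"
proof -
  have "PP \<otimes> (ff \<otimes> SS) = ff \<otimes> (((\<one> \<ominus> zz) \<otimes> ff) \<otimes> SS)" by (simp add: PP_def m_assoc)
  also have "\<dots> = (ff \<otimes> ff) \<otimes> ((\<one> \<ominus> zz) \<otimes> SS)" by (simp add: z1_ff ff_1z[symmetric] m_assoc)
  finally show ?thesis by (simp add: ff_ff SS_l)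
qed
lemma fSP: "(ff \<otimes> SS) \<otimes> PP = ff"
proof -
  have "(ff \<otimes> SS) \<otimes> PP = ff \<otimes> ((SS \<otimes> ff) \<otimes> (\<one> \<ominus> zz))" by (simp add: PP_def m_assoc)
  also have "\<dots> = (ff \<otimes> ff) \<otimes> (SS \<otimes> (\<one> \<ominus> zz))" by (simp add: SS_ff m_assoc)
  finally show ?thesis by (simp add: ff_ff SS_r)
qed

lemma unitI': "y \<in> carrier R \<Longrightarrow> z \<in> carrier R \<Longrightarrow> z \<otimes> y = \<one> \<Longrightarrow> y \<otimes> z = \<one> \<Longrightarrow> y \<in> Units R"
  unfolding Units_def by blast

lemma two_units: "\<exists>U\<in>Units R. \<exists>V\<in>Units R. x = U \<oplus> V"
proof -
  have "(TT \<oplus> ff) \<otimes> (QQ \<oplus> ff) = TT \<otimes> QQ \<oplus> TT \<otimes> ff \<oplus> (ff \<otimes> QQ \<oplus> ff \<otimes> ff)"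
    by (simp add: l_distr r_distr a_ac)
  then have u1: "(TT \<oplus> ff) \<otimes> (QQ \<oplus> ff) = \<one>" by (simp add: TQ Tf fQ ff_ff ee_ff_sum)
  have "(QQ \<oplus> ff) \<otimes> (TT \<oplus> ff) = QQ \<otimes> TT \<oplus> QQ \<otimes> ff \<oplus> (ff \<otimes> TT \<oplus> ff \<otimes> ff)"
    by (simp add: l_distr r_distr a_ac)
  then have u2: "(QQ \<oplus> ff) \<otimes> (TT \<oplus> ff) = \<one>" by (simp add: QT Qf fT ff_ff ee_ff_sum)
  have Uu: "TT \<oplus> ff \<in> Units R" by (rule unitI'[OF _ _ u2 u1]) simp_all
  have "(TT \<ominus> PP) \<otimes> (QQ \<ominus> ff \<otimes> SS) = TT \<otimes> QQ \<ominus> TT \<otimes> (ff \<otimes> SS) \<ominus> (PP \<otimes> QQ \<ominus> PP \<otimes> (ff \<otimes> SS))"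
    by (simp add: l_distr r_distr minus_eq l_minus r_minus a_ac minus_add)
  then have v1: "(TT \<ominus> PP) \<otimes> (QQ \<ominus> ff \<otimes> SS) = \<one>" by (simp add: TQ TfS PQ PfS ee_ff_sum minus_eq)
  have "(QQ \<ominus> ff \<otimes> SS) \<otimes> (TT \<ominus> PP) = QQ \<otimes> TT \<ominus> QQ \<otimes> PP \<ominus> ((ff \<otimes> SS) \<otimes> TT \<ominus> (ff \<otimes> SS) \<otimes> PP)"
    by (simp add: l_distr r_distr minus_eq l_minus r_minus a_ac minus_add)
  then have v2: "(QQ \<ominus> ff \<otimes> SS) \<otimes> (TT \<ominus> PP) = \<one>" by (simp add: QT QP fST fSP ee_ff_sum minus_eq)
  have Vu: "TT \<ominus> PP \<in> Units R" by (rule unitI'[OF _ _ v2 v1]) simp_all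
  have "TT \<oplus> ff \<oplus> (TT \<ominus> PP) = (TT \<oplus> TT) \<oplus> (ff \<ominus> PP)" by (simp add: minus_eq a_ac)
  also have "\<dots> = x \<otimes> ee \<oplus> zz" proof -
    have "ff \<ominus> PP = zz" by (simp add: PP_alt minus_eq minus_add minus_minus r_neg2)
    then show ?thesis by (simp only: TT_def tt[OF m_closed[OF x ee_c]])
  qed
  also have "\<dots> = x \<otimes> (ee \<oplus> ff)" by (simp add: zz_def ff_x r_distr)
  finally have "x = TT \<oplus> ff \<oplus> (TT \<ominus> PP)" by (simp add: ee_ff_sum)
  then show ?thesis using Uu Vu by blast
qed

end

lemma dz_apply:
  fixes R (structure)
  assumes "ring R" "x \<in> carrier R" "a \<in> carrier R" "b \<in> carrier R" "t \<in> carrier R"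
    "x [^] k = a \<otimes> x [^] Suc k" "x [^] k = x [^] Suc k \<otimes> b"
    "t \<otimes> (\<one> \<oplus> \<one>) = \<one>" "(\<one> \<oplus> \<one>) \<otimes> t = \<one>"
  shows "\<exists>U\<in>Units R. \<exists>V\<in>Units R. x = U \<oplus> V"
proof -
  interpret dz R x a b t k
    by (rule dz.intro[OF assms(1)], rule dz_axioms.intro) (rule assms)+
  show ?thesis by (rule two_units)
qed

lemma split3: "j < Suc n \<Longrightarrow> (\<Sum>k\<in>{0..<Suc n}. f k) = (\<Sum>k\<in>{0..<j}. f k) + f j + (\<Sum>k\<in>{Suc j..<Suc n}. f k)"
proof -
  assume j: "j < Suc n"
  have "(\<Sum>k\<in>{0..<Suc n}. f k) = (\<Sum>k\<in>{0..<j}. f k) + (\<Sum>k\<in>{j..<Suc n}. f k)"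
    using j by (intro sum.atLeastLessThan_concat[symmetric]) auto
  also have "(\<Sum>k\<in>{j..<Suc n}. f k) = f j + (\<Sum>k\<in>{Suc j..<Suc n}. f k)"
    using j by (rule sum.atLeast_Suc_lessThan)
  finally show ?thesis by (simp add: add.assoc)
qed

lemma left_rel:
  fixes x :: "nat \<Rightarrow> 'a::ring_1"
  assumes n: "n > 0" and loc: "local_ring TYPE('a)" and x: "x \<in> gr_carrier n"
  shows "\<exists>j a0. a0 \<in> gr_carrier n \<and>
     (\<lambda>l. (x [^]\<^bsub>SR n\<^esub> j) l - gr_mult n a0 (x [^]\<^bsub>SR n\<^esub> Suc j) l) \<in> II n"
proof -
  interpret S: ring "SR n :: (nat \<Rightarrow> 'a) ring" by (rule SR_ring[OF n])
  define P where "P = (\<lambda>m. x [^]\<^bsub>SR n\<^esub> (m::nat))"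
  have Pc: "\<And>m. P m \<in> gr_carrier n" using S.nat_pow_closed[of x] x by (simp add: P_def)
  have P0: "\<And>m l. n \<le> l \<Longrightarrow> P m l = 0" using Pc by (simp add: carrier_iff)
  have Pm: "\<And>i j. gr_mult n (P i) (P j) = P (i + j)"
    using S.nat_pow_mult[of x] x by (simp add: P_def)
  have "\<forall>k\<in>{0..<Suc n}. \<forall>l\<ge>n. P k l \<in> jacobson" by (simp add: P0 J_zero)
  from steinitz_left[OF loc _ _ this] obtain c where
    c1: "\<exists>k\<in>{0..<Suc n}. c k \<notin> jacobson" and c2: "\<forall>l. (\<Sum>k\<in>{0..<Suc n}. c k * P k l) \<in> jacobson"
    by auto
  define j where "j = (LEAST k. k < Suc n \<and> c k \<notin> jacobson)"
  have j: "j < Suc n \<and> c j \<notin> jacobson" unfolding j_def using c1 by (metis (mono_tags, lifting) LeastI atLeastLessThan_iff)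
  have jl: "\<And>k. k < j \<Longrightarrow> c k \<in> jacobson"
  proof (rule ccontr)
    fix k assume "k < j" "c k \<notin> jacobson"
    then show False using not_less_Least[of k "\<lambda>k. k < Suc n \<and> c k \<notin> jacobson"] j unfolding j_def by auto
  qed
  obtain g where g: "g * c j = 1" using nonJ_unit[OF loc] j by blast
  define a0 where "a0 = (\<lambda>l. \<Sum>k\<in>{Suc j..<Suc n}. (- (g * c k)) * P (k - Suc j) l)"
  have a0c: "a0 \<in> gr_carrier n" using P0 by (simp add: a0_def carrier_iff)
  have ma: "gr_mult n a0 (P (Suc j)) = (\<lambda>l. \<Sum>k\<in>{Suc j..<Suc n}. (- (g * c k)) * P k l)"
  proof -
    have "gr_mult n a0 (P (Suc j)) = (\<lambda>l. \<Sum>k\<in>{Suc j..<Suc n}. gr_mult n (\<lambda>l. (- (g * c k)) * P (k - Suc j) l) (P (Suc j)) l)"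
      unfolding a0_def by (rule gm_sum_left)
    also have "\<dots> = (\<lambda>l. \<Sum>k\<in>{Suc j..<Suc n}. (- (g * c k)) * P k l)"
      by (rule ext, rule sum.cong, rule refl, simp only: gm_scal_left Pm, simp)
    finally show ?thesis .
  qed
  have "(\<lambda>l. P j l - gr_mult n a0 (P (Suc j)) l) \<in> II n"
    unfolding II_def
  proof (intro CollectI conjI allI)
    show "(\<lambda>l. P j l - gr_mult n a0 (P (Suc j)) l) \<in> gr_carrier n"
      using Pc gm_carrier[of n a0 "P (Suc j)"] by (simp add: carrier_iff)
    fix l
    define F where "F = (\<lambda>k. c k * P k l)"
    have A0: "(\<Sum>k\<in>{0..<j}. F k) \<in> jacobson" using jl by (auto simp: F_def intro!: J_sum J_rmult[OF loc])
    have tot: "(\<Sum>k\<in>{0..<Suc n}. F k) = (\<Sum>k\<in>{0..<j}. F k) + F j + (\<Sum>k\<in>{Suc j..<Suc n}. F k)"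
      using j split3 by blast
    have "P j l - gr_mult n a0 (P (Suc j)) l = g * F j + g * (\<Sum>k\<in>{Suc j..<Suc n}. F k)"
      unfolding ma F_def using g by (simp add: sum_negf sum_distrib_left mult.assoc[symmetric] del: sum.op_ivl_Suc)
    also have "\<dots> = g * ((\<Sum>k\<in>{0..<Suc n}. F k) - (\<Sum>k\<in>{0..<j}. F k))"
      unfolding tot by (simp add: algebra_simps del: sum.op_ivl_Suc)
    finally show "P j l - gr_mult n a0 (P (Suc j)) l \<in> jacobson"
      using A0 c2 by (auto simp: F_def intro!: J_lmult J_diff)
  qed
  then show ?thesis using a0c unfolding P_def by blast
qed

lemma right_rel:
  fixes x :: "nat \<Rightarrow> 'a::ring_1"
  assumes n: "n > 0" and loc: "local_ring TYPE('a)" and x: "x \<in> gr_carrier n"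
  shows "\<exists>j b0. b0 \<in> gr_carrier n \<and>
     (\<lambda>l. (x [^]\<^bsub>SR n\<^esub> j) l - gr_mult n (x [^]\<^bsub>SR n\<^esub> Suc j) b0 l) \<in> II n"
proof -
  interpret S: ring "SR n :: (nat \<Rightarrow> 'a) ring" by (rule SR_ring[OF n])
  define P where "P = (\<lambda>m. x [^]\<^bsub>SR n\<^esub> (m::nat))"
  have Pc: "\<And>m. P m \<in> gr_carrier n" using S.nat_pow_closed[of x] x by (simp add: P_def)
  have P0: "\<And>m l. n \<le> l \<Longrightarrow> P m l = 0" using Pc by (simp add: carrier_iff)
  have Pm: "\<And>i j. gr_mult n (P i) (P j) = P (i + j)"
    using S.nat_pow_mult[of x] x by (simp add: P_def)
  have "\<forall>k\<in>{0..<Suc n}. \<forall>l\<ge>n. P k l \<in> jacobson" by (simp add: P0 J_zero)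
  from steinitz_right[OF loc _ _ this] obtain c where
    c1: "\<exists>k\<in>{0..<Suc n}. c k \<notin> jacobson" and c2: "\<forall>l. (\<Sum>k\<in>{0..<Suc n}. P k l * c k) \<in> jacobson"
    by auto
  define j where "j = (LEAST k. k < Suc n \<and> c k \<notin> jacobson)"
  have j: "j < Suc n \<and> c j \<notin> jacobson" unfolding j_def using c1 by (metis (mono_tags, lifting) LeastI atLeastLessThan_iff)
  have jl: "\<And>k. k < j \<Longrightarrow> c k \<in> jacobson"
  proof (rule ccontr)
    fix k assume "k < j" "c k \<notin> jacobson"
    then show False using not_less_Least[of k "\<lambda>k. k < Suc n \<and> c k \<notin> jacobson"] j unfolding j_def by auto
  qed
  obtain g where g: "c j * g = 1" using nonJ_unit[OF loc] j by blast
  define b0 where "b0 = (\<lambda>l. \<Sum>k\<in>{Suc j..<Suc n}. P (k - Suc j) l * (- (c k * g)))"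
  have b0c: "b0 \<in> gr_carrier n" using P0 by (simp add: b0_def carrier_iff)
  have mb: "gr_mult n (P (Suc j)) b0 = (\<lambda>l. \<Sum>k\<in>{Suc j..<Suc n}. P k l * (- (c k * g)))"
  proof -
    have "gr_mult n (P (Suc j)) b0 = (\<lambda>l. \<Sum>k\<in>{Suc j..<Suc n}. gr_mult n (P (Suc j)) (\<lambda>l. P (k - Suc j) l * (- (c k * g))) l)"
      unfolding b0_def by (rule gm_sum_right)
    also have "\<dots> = (\<lambda>l. \<Sum>k\<in>{Suc j..<Suc n}. P k l * (- (c k * g)))"
      by (rule ext, rule sum.cong, rule refl, simp only: gm_scal_right Pm, simp)
    finally show ?thesis .
  qed
  have "(\<lambda>l. P j l - gr_mult n (P (Suc j)) b0 l) \<in> II n"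
    unfolding II_def
  proof (intro CollectI conjI allI)
    show "(\<lambda>l. P j l - gr_mult n (P (Suc j)) b0 l) \<in> gr_carrier n"
      using Pc gm_carrier[of n "P (Suc j)" b0] by (simp add: carrier_iff)
    fix l
    define F where "F = (\<lambda>k. P k l * c k)"
    have A0: "(\<Sum>k\<in>{0..<j}. F k) \<in> jacobson" using jl by (auto simp: F_def intro!: J_sum J_lmult)
    have tot: "(\<Sum>k\<in>{0..<Suc n}. F k) = (\<Sum>k\<in>{0..<j}. F k) + F j + (\<Sum>k\<in>{Suc j..<Suc n}. F k)"
      using j split3 by blast
    have "P j l - gr_mult n (P (Suc j)) b0 l = F j * g + (\<Sum>k\<in>{Suc j..<Suc n}. F k) * g"
      unfolding mb F_def using g by (simp add: sum_negf sum_distrib_right mult.assoc del: sum.op_ivl_Suc)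
    also have "\<dots> = ((\<Sum>k\<in>{0..<Suc n}. F k) - (\<Sum>k\<in>{0..<j}. F k)) * g"
      unfolding tot by (simp add: algebra_simps del: sum.op_ivl_Suc)
    finally show "P j l - gr_mult n (P (Suc j)) b0 l \<in> jacobson"
      using A0 c2 by (auto simp: F_def intro!: J_rmult[OF loc] J_diff)
  qed
  then show ?thesis using b0c unfolding P_def by blast
qed

theorem theorem10:
  fixes n :: nat
  assumes "n > 0"
    and "local_ring TYPE('a::ring_1)"
    and "char_rad_quot TYPE('a) \<noteq> 2"
  shows "gr_good n TYPE('a) 2"
proof -
  have n: "n > 0" and loc: "local_ring TYPE('a)" using assms by auto
  interpret S: ring "SR n :: (nat \<Rightarrow> 'a) ring" by (rule SR_ring[OF n])
  interpret I: ideal "II n" "SR n :: (nat \<Rightarrow> 'a) ring" by (rule II_ideal[OF n loc])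
  define Q where "Q = (SR n :: (nat \<Rightarrow> 'a) ring) Quot (II n)"
  interpret Q: ring Q unfolding Q_def by (rule I.quotient_is_ring)
  define cl where "cl = a_r_coset (SR n :: (nat \<Rightarrow> 'a) ring) (II n)"
  interpret h: ring_hom_ring "SR n :: (nat \<Rightarrow> 'a) ring" Q cl
    unfolding Q_def cl_def by (rule I.rcos_ring_hom_ring)
  have cl_eq: "cl u = cl v" if u: "u \<in> gr_carrier n" and v: "v \<in> gr_carrier n"
    and uv: "(\<lambda>l. u l - v l) \<in> II n" for u v :: "nat \<Rightarrow> 'a"
  proof -
    have "u \<ominus>\<^bsub>SR n\<^esub> v \<in> II n" using uv SR_minus[OF n u v] by simp
    then have "u \<in> II n +>\<^bsub>SR n\<^esub> v"
      using I.a_rcos_module_minus[OF S.ring_axioms] u v by simp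
    then show ?thesis unfolding cl_def using I.a_repr_independence' v by (metis SR_simps(1))
  qed
  have cl_eq_rev: "(\<lambda>l. u l - v l) \<in> II n" if u: "u \<in> gr_carrier n" and v: "v \<in> gr_carrier n"
    and uv: "cl u = cl v" for u v :: "nat \<Rightarrow> 'a"
  proof -
    have "u \<in> II n +>\<^bsub>SR n\<^esub> v" using I.a_rcos_self[of u] u uv unfolding cl_def by simp
    then have "u \<ominus>\<^bsub>SR n\<^esub> v \<in> II n"
      using I.a_rcos_module_minus[OF S.ring_axioms] u v by simp
    then show ?thesis using SR_minus[OF n u v] by simp
  qed
  have cl_surj: "\<exists>u\<in>gr_carrier n. X = cl u" if "X \<in> carrier Q" for X
    using that unfolding Q_def cl_def FactRing_def A_RCOSETS_def' by auto
  have unit_lift: "gr_unit n u" if u: "u \<in> gr_carrier n" and uU: "cl u \<in> Units Q" for u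
  proof -
    obtain Z where Z: "Z \<in> carrier Q" "Z \<otimes>\<^bsub>Q\<^esub> cl u = \<one>\<^bsub>Q\<^esub>" "cl u \<otimes>\<^bsub>Q\<^esub> Z = \<one>\<^bsub>Q\<^esub>"
      using uU unfolding Units_def by blast
    obtain z where z: "z \<in> gr_carrier n" "Z = cl z" using cl_surj[OF Z(1)] by blast
    have "cl (gr_mult n z u) = cl (gr_one n)"
      using h.hom_mult[of z u] h.hom_one z u Z by simp
    then have "(\<lambda>l. gr_mult n z u l - gr_one n l) \<in> II n"
      by (intro cl_eq_rev) (simp_all add: gm_carrier one_carrier[OF n])
    then obtain v1 where v1: "v1 \<in> gr_carrier n" "gr_mult n v1 (gr_mult n z u) = gr_one n"
      using unit_II[OF n gm_carrier] by blast
    have "cl (gr_mult n u z) = cl (gr_one n)"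
      using h.hom_mult[of u z] h.hom_one z u Z by simp
    then have "(\<lambda>l. gr_mult n u z l - gr_one n l) \<in> II n"
      by (intro cl_eq_rev) (simp_all add: gm_carrier one_carrier[OF n])
    then obtain v2 where v2: "v2 \<in> gr_carrier n" "gr_mult n (gr_mult n u z) v2 = gr_one n"
      using unit_II[OF n gm_carrier] by blast
    have L: "gr_mult n (gr_mult n v1 z) u = gr_one n" using v1(2) by (simp add: gm_assoc[OF n])
    have R: "gr_mult n u (gr_mult n z v2) = gr_one n" using v2(2) by (simp add: gm_assoc[OF n])
    have "gr_mult n v1 z = gr_mult n (gr_mult n v1 z) (gr_mult n u (gr_mult n z v2))"
      by (simp add: R gm_one_right[OF n gm_carrier])
    also have "\<dots> = gr_mult n (gr_mult n (gr_mult n v1 z) u) (gr_mult n z v2)"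
      by (simp only: gm_assoc[OF n])
    also have "\<dots> = gr_mult n z v2" by (simp only: L gm_one_left[OF n gm_carrier])
    finally have "gr_mult n v1 z = gr_mult n z v2" .
    then show ?thesis unfolding gr_unit_def using L R u gm_carrier
      by (intro conjI bexI[of _ "gr_mult n v1 z"]) auto
  qed
  show ?thesis unfolding gr_good_def
  proof
    fix x :: "nat \<Rightarrow> 'a" assume x: "x \<in> gr_carrier n"
    obtain j a0 where a0: "a0 \<in> gr_carrier n"
      and ja: "(\<lambda>l. (x [^]\<^bsub>SR n\<^esub> j) l - gr_mult n a0 (x [^]\<^bsub>SR n\<^esub> Suc j) l) \<in> II n"
      using left_rel[OF n loc x] by blast
    obtain j' b0 where b0: "b0 \<in> gr_carrier n"
      and jb: "(\<lambda>l. (x [^]\<^bsub>SR n\<^esub> j') l - gr_mult n (x [^]\<^bsub>SR n\<^esub> Suc j') b0 l) \<in> II n"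
      using right_rel[OF n loc x] by blast
    define X where "X = cl x"
    define A where "A = cl a0"
    define B where "B = cl b0"
    have XA: "X \<in> carrier Q" "A \<in> carrier Q" "B \<in> carrier Q" using x a0 b0 by (simp_all add: X_def A_def B_def)
    have pw: "cl (x [^]\<^bsub>SR n\<^esub> m) = X [^]\<^bsub>Q\<^esub> m" for m :: nat
      using h.hom_nat_pow[of x m] x by (simp add: X_def)
    have xpc: "x [^]\<^bsub>SR n\<^esub> m \<in> gr_carrier n" for m :: nat using S.nat_pow_closed[of x m] x by simp
    have xpS: "x [^]\<^bsub>SR n\<^esub> m \<in> carrier (SR n)" for m :: nat using xpc by simp
    have a0S: "a0 \<in> carrier (SR n)" "b0 \<in> carrier (SR n)" using a0 b0 by simp_all
    have hA: "X [^]\<^bsub>Q\<^esub> j = A \<otimes>\<^bsub>Q\<^esub> X [^]\<^bsub>Q\<^esub> Suc j"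
    proof -
      have e2: "cl (gr_mult n a0 (x [^]\<^bsub>SR n\<^esub> Suc j)) = A \<otimes>\<^bsub>Q\<^esub> cl (x [^]\<^bsub>SR n\<^esub> Suc j)"
        using h.hom_mult[OF a0S(1) xpS] unfolding A_def SR_simps .
      have "X [^]\<^bsub>Q\<^esub> j = cl (x [^]\<^bsub>SR n\<^esub> j)" by (rule pw[symmetric])
      also have "\<dots> = cl (gr_mult n a0 (x [^]\<^bsub>SR n\<^esub> Suc j))"
        by (rule cl_eq[OF xpc gm_carrier ja])
      also have "\<dots> = A \<otimes>\<^bsub>Q\<^esub> cl (x [^]\<^bsub>SR n\<^esub> Suc j)" by (rule e2)
      also have "\<dots> = A \<otimes>\<^bsub>Q\<^esub> X [^]\<^bsub>Q\<^esub> Suc j" by (simp only: pw)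
      finally show ?thesis .
    qed
    have hB: "X [^]\<^bsub>Q\<^esub> j' = X [^]\<^bsub>Q\<^esub> Suc j' \<otimes>\<^bsub>Q\<^esub> B"
    proof -
      have e2: "cl (gr_mult n (x [^]\<^bsub>SR n\<^esub> Suc j') b0) = cl (x [^]\<^bsub>SR n\<^esub> Suc j') \<otimes>\<^bsub>Q\<^esub> B"
        using h.hom_mult[OF xpS a0S(2)] unfolding B_def SR_simps .
      have "X [^]\<^bsub>Q\<^esub> j' = cl (x [^]\<^bsub>SR n\<^esub> j')" by (rule pw[symmetric])
      also have "\<dots> = cl (gr_mult n (x [^]\<^bsub>SR n\<^esub> Suc j') b0)"
        by (rule cl_eq[OF xpc gm_carrier jb])
      also have "\<dots> = cl (x [^]\<^bsub>SR n\<^esub> Suc j') \<otimes>\<^bsub>Q\<^esub> B" by (rule e2)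
      also have "\<dots> = X [^]\<^bsub>Q\<^esub> Suc j' \<otimes>\<^bsub>Q\<^esub> B" by (simp only: pw)
      finally show ?thesis .
    qed
    define k where "k = j + j'"
    have hA': "X [^]\<^bsub>Q\<^esub> k = A \<otimes>\<^bsub>Q\<^esub> X [^]\<^bsub>Q\<^esub> Suc k"
    proof -
      have "X [^]\<^bsub>Q\<^esub> k = X [^]\<^bsub>Q\<^esub> j \<otimes>\<^bsub>Q\<^esub> X [^]\<^bsub>Q\<^esub> j'"
        using XA by (simp add: k_def Q.nat_pow_mult)
      also have "\<dots> = A \<otimes>\<^bsub>Q\<^esub> (X [^]\<^bsub>Q\<^esub> Suc j \<otimes>\<^bsub>Q\<^esub> X [^]\<^bsub>Q\<^esub> j')"
        by (simp only: hA) (simp add: XA Q.m_assoc del: Q.nat_pow_Suc)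
      also have "\<dots> = A \<otimes>\<^bsub>Q\<^esub> X [^]\<^bsub>Q\<^esub> Suc k"
        by (simp only: Q.nat_pow_mult[OF XA(1)] k_def add_Suc)
      finally show ?thesis .
    qed
    have hB': "X [^]\<^bsub>Q\<^esub> k = X [^]\<^bsub>Q\<^esub> Suc k \<otimes>\<^bsub>Q\<^esub> B"
    proof -
      have "X [^]\<^bsub>Q\<^esub> k = X [^]\<^bsub>Q\<^esub> j \<otimes>\<^bsub>Q\<^esub> X [^]\<^bsub>Q\<^esub> j'"
        using XA by (simp add: k_def Q.nat_pow_mult)
      also have "\<dots> = (X [^]\<^bsub>Q\<^esub> j \<otimes>\<^bsub>Q\<^esub> X [^]\<^bsub>Q\<^esub> Suc j') \<otimes>\<^bsub>Q\<^esub> B"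
        by (simp only: hB) (simp add: XA Q.m_assoc del: Q.nat_pow_Suc)
      also have "\<dots> = X [^]\<^bsub>Q\<^esub> Suc k \<otimes>\<^bsub>Q\<^esub> B"
        by (simp only: Q.nat_pow_mult[OF XA(1)] k_def add_Suc_right)
      finally show ?thesis .
    qed
    have "(2::'a) \<notin> jacobson" by (rule two_notin_J[OF loc assms(3)])
    then obtain g :: 'a where g: "2 * g = 1" "g * 2 = 1" using nonJ_unit[OF loc] by blast
    define sc where "sc = (\<lambda>l. g * gr_one n l)"
    have scc: "sc \<in> gr_carrier n" using n by (simp add: sc_def carrier_iff gr_one_def)
    have sc': "sc = (\<lambda>l. gr_one n l * g)" by (rule ext) (simp add: sc_def gr_one_def)
    have two: "(\<lambda>l. gr_one n l + gr_one n l) = (\<lambda>l. gr_one n l * 2)" by (rule ext) (simp add: gr_one_def)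
    have two': "(\<lambda>l. gr_one n l + gr_one n l) = (\<lambda>l. 2 * gr_one n l)" by (rule ext) (simp add: gr_one_def)
    have s1: "gr_mult n sc (\<lambda>l. gr_one n l + gr_one n l) = gr_one n"
      unfolding sc_def gm_scal_left two gm_scal_right gm_one_left[OF n one_carrier[OF n]]
      by (rule ext) (simp add: gr_one_def mult.assoc[symmetric] g)
    have s2: "gr_mult n (\<lambda>l. gr_one n l + gr_one n l) sc = gr_one n"
      unfolding sc' gm_scal_right two' gm_scal_left gm_one_left[OF n one_carrier[OF n]]
      by (rule ext) (simp add: gr_one_def mult.assoc g)
    have oo: "(\<lambda>l. gr_one n l + gr_one n l) \<in> gr_carrier n" using n by (simp add: carrier_iff gr_one_def)
    define T where "T = cl sc"
    have Tc: "T \<in> carrier Q" using scc by (simp add: T_def)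
    have oneS: "gr_one n \<in> carrier (SR n)" using one_carrier[OF n] by simp
    have scS: "sc \<in> carrier (SR n)" "(\<lambda>l. gr_one n l + gr_one n l) \<in> carrier (SR n)" using scc oo by simp_all
    have o1: "cl (\<lambda>l. gr_one n l + gr_one n l) = \<one>\<^bsub>Q\<^esub> \<oplus>\<^bsub>Q\<^esub> \<one>\<^bsub>Q\<^esub>"
      using h.hom_add[OF oneS oneS] h.hom_one unfolding SR_simps by simp
    have 1: "T \<otimes>\<^bsub>Q\<^esub> (\<one>\<^bsub>Q\<^esub> \<oplus>\<^bsub>Q\<^esub> \<one>\<^bsub>Q\<^esub>) = \<one>\<^bsub>Q\<^esub>"
    proof -
      have "T \<otimes>\<^bsub>Q\<^esub> (\<one>\<^bsub>Q\<^esub> \<oplus>\<^bsub>Q\<^esub> \<one>\<^bsub>Q\<^esub>) = cl (gr_mult n sc (\<lambda>l. gr_one n l + gr_one n l))"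
        using h.hom_mult[OF scS] unfolding T_def o1[symmetric] SR_simps by simp
      then show ?thesis using s1 h.hom_one by simp
    qed
    have 2: "(\<one>\<^bsub>Q\<^esub> \<oplus>\<^bsub>Q\<^esub> \<one>\<^bsub>Q\<^esub>) \<otimes>\<^bsub>Q\<^esub> T = \<one>\<^bsub>Q\<^esub>"
    proof -
      have "(\<one>\<^bsub>Q\<^esub> \<oplus>\<^bsub>Q\<^esub> \<one>\<^bsub>Q\<^esub>) \<otimes>\<^bsub>Q\<^esub> T = cl (gr_mult n (\<lambda>l. gr_one n l + gr_one n l) sc)"
        using h.hom_mult[OF scS(2) scS(1)] unfolding T_def o1[symmetric] SR_simps by simp
      then show ?thesis using s2 h.hom_one by simp
    qed
    obtain U' V' where U': "U' \<in> Units Q" and V': "V' \<in> Units Q" and XUV: "X = U' \<oplus>\<^bsub>Q\<^esub> V'"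
      using dz_apply[OF Q.ring_axioms XA(1) XA(2) XA(3) Tc hA' hB' 1 2] by blast
    have U'c: "U' \<in> carrier Q" "V' \<in> carrier Q" using U' V' by (auto simp: Units_def)
    obtain u where u: "u \<in> gr_carrier n" "U' = cl u" using cl_surj U'c by blast
    define v where "v = (\<lambda>l. x l - u l)"
    have vc: "v \<in> gr_carrier n" using x u by (simp add: v_def carrier_iff)
    have "cl v = cl (x \<ominus>\<^bsub>SR n\<^esub> u)" using SR_minus[OF n x u(1)] by (simp add: v_def)
    also have "\<dots> = X \<oplus>\<^bsub>Q\<^esub> \<ominus>\<^bsub>Q\<^esub> U'"
    proof -
      have xS: "x \<in> carrier (SR n)" "u \<in> carrier (SR n)" using x u by simp_all
      have "cl (x \<ominus>\<^bsub>SR n\<^esub> u) = cl (x \<oplus>\<^bsub>SR n\<^esub> \<ominus>\<^bsub>SR n\<^esub> u)" by (simp only: S.minus_eq)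
      also have "\<dots> = cl x \<oplus>\<^bsub>Q\<^esub> cl (\<ominus>\<^bsub>SR n\<^esub> u)" by (rule h.hom_add[OF xS(1) S.a_inv_closed[OF xS(2)]])
      also have "\<dots> = cl x \<oplus>\<^bsub>Q\<^esub> \<ominus>\<^bsub>Q\<^esub> cl u" by (simp only: h.hom_a_inv[OF xS(2)])
      finally show ?thesis using u by (simp only: X_def)
    qed
    also have "\<dots> = V'" unfolding XUV using U'c by (simp add: Q.a_comm[of U' V'] Q.a_assoc Q.r_neg)
    finally have clv: "cl v = V'" .
    have uu: "gr_unit n u" using unit_lift u U' by simp
    have vu: "gr_unit n v" using unit_lift vc V' clv by simp
    have wdef: "\<forall>i<(2::nat). gr_unit n ((\<lambda>i::nat. if i = 0 then u else v) i)" using uu vu by auto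
    have xeq: "x = (\<lambda>k. \<Sum>i<(2::nat). (\<lambda>i::nat. if i = 0 then u else v) i k)"
      by (rule ext) (simp add: v_def numeral_2_eq_2)
    show "\<exists>w. (\<forall>i<(2::nat). gr_unit n (w i)) \<and> x = (\<lambda>k. \<Sum>i<(2::nat). w i k)"
      by (rule exI[of _ "\<lambda>i::nat. if i = 0 then u else v"], rule conjI, rule wdef, rule xeq)
  qed
qed

end
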